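(* Let $(G,L_G)$ and $(H,L_H)$ be right-resolving labeled graphs presenting sofic shifts $Y=L_G(X_G)$ and $Z=L_H(X_H)$, respectively. Assume that there are conjugacies $\psi : Y \to Z$ and $\phi : X_G \to X_H$ such that $L_H\circ \phi = \psi \circ L_G$. Then there is a unique conjugacy $\phi' : X_{G'} \to X_{H'}$ such that $L_{H'}\circ \phi' = \psi\circ L_{G'}$, where $(G',L_{G'})$ and $(H',L_{H'})$ are the labeled graphs obtained from $(G,L_G)$ and $(H,L_H)$ by the construction described in the context.
   Context: A labeled graph $(H,L_H)$ consists of a finite directed graph $H$ with vertex set $V_H$, edge set $E_H$, source and terminal maps $s_H,t_H:E_H\to V_H$, without sinks or sources, together with a labeling $L_H:E_H\to A$ into a finite alphabet $A$. $X_H\subseteq E_H^{\mathbb Z}$ is the edge shift of bi-infinite paths, and $L_H$ is applied coordinatewise to paths, giving a factor map $L_H:X_H\to L_H(X_H)$; $(H,L_H)$ presents the sofic shift $L_H(X_H)$. It is right-resolving if distinct edges with the same source have distinct labels. A conjugacy is a shift-commuting homeomorphism. Subset construction: given a right-resolving $(H,L_H)$ presenting $Y$, the labeled graph $(H'',L_{H''})$ has as vertices the non-empty subsets of $V_H$; for vertices $F,F'$ and a symbol $a\in A$ there is an edge from $F$ to $F'$ labeled $a$ when $F\subseteq\{s_H(e): e\in E_H, L_H(e)=a\}$ and $F'=\{t_H(e): e\in E_H, s_H(e)\in F, L_H(e)=a\}$. Then $H''$ is trimmed by repeatedly removing sinks and sources, so that it has neither. Since $(H,L_H)$ is right-resolving,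 $L_H^{-1}(y)$ is finite for each $y\in Y$; define $\beta_H(y)\in X_{H''}$ as the bi-infinite path whose $i$-th edge is the edge labeled $y_i$ from $F_i$ to $F_{i+1}$, where $F_i=\{s_H(k_i): k\in L_H^{-1}(y)\}$. A vertex $v$ of a graph is recurrent if there is a path from $v$ to $v$; two recurrent vertices are equivalent if each can be reached from the other by a path; an equivalence class $C$ is a component, $X_C$ denotes the edge shift of the subgraph with vertex set $C$ and all edges with source and terminal vertex in $C$. A point $x$ of $X_{H''}$ is backward asymptotic to $X_C$ if there are $u\in X_C$ and $N\in\mathbb Z$ with $x_i=u_i$ for all $i\le N$. Let $H'$ be the subgraph of $H''$ whose vertices are all vertices of $H''$ reachable by a path (possibly of length zero) from a vertex of some component $C$ of $H''$ for which there exists $y\in Y$ with $\beta_H(y)$ backward asymptotic to $X_C$, and whose edges are all edges of $H''$ with source in this vertex set; $L_{H'}$ is the restriction of $L_{H''}$. $(G',L_{G'})$ is defined in the same way from $(G,L_G)$. *)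

theory Defs
  imports "HOL-Analysis.Analysis" "Graph_Theory.Digraph"
begin

text \<open>A graph is a finite directed graph (multi-edges allowed), given as a
  Graph_Theory pre_digraph; tail = source map, head = terminal map.\<close>

definition no_sinks_sources :: "('v,'e) pre_digraph \<Rightarrow> bool" where
  "no_sinks_sources G \<longleftrightarrow>
     (\<forall>v\<in>verts G. (\<exists>e\<in>arcs G. tail G e = v) \<and> (\<exists>e\<in>arcs G. head G e = v))"

definition graph_ok :: "('v,'e) pre_digraph \<Rightarrow> bool" where
  "graph_ok G \<longleftrightarrow> fin_digraph G \<and> no_sinks_sources G"

definition right_resolving :: "('v,'e) pre_digraph \<Rightarrow> ('e \<Rightarrow> 'a) \<Rightarrow> bool" where
  "right_resolving G L \<longleftrightarrow>
     (\<forall>e\<in>arcs G. \<forall>e'\<in>arcs G. tail G e = tail G e' \<and> L e = L e' \<longrightarrow> e = e')"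

definition edge_shift :: "('v,'e) pre_digraph \<Rightarrow> (int \<Rightarrow> 'e) set" where
  "edge_shift G = {x. \<forall>i. x i \<in> arcs G \<and> head G (x i) = tail G (x (i + 1))}"

definition label_map :: "('e \<Rightarrow> 'a) \<Rightarrow> (int \<Rightarrow> 'e) \<Rightarrow> (int \<Rightarrow> 'a)" where
  "label_map L x = (\<lambda>i. L (x i))"

definition sofic :: "('v,'e) pre_digraph \<Rightarrow> ('e \<Rightarrow> 'a) \<Rightarrow> (int \<Rightarrow> 'a) set" where
  "sofic G L = label_map L ` edge_shift G"

definition shift :: "(int \<Rightarrow> 'a) \<Rightarrow> (int \<Rightarrow> 'a)" where
  "shift x = (\<lambda>i. x (i + 1))"

definition seq_top :: "(int \<Rightarrow> 'a) topology" where
  "seq_top = product_topology (\<lambda>_. discrete_topology UNIV) UNIV"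

definition conjugacy :: "(int \<Rightarrow> 'a) set \<Rightarrow> (int \<Rightarrow> 'b) set \<Rightarrow> ((int \<Rightarrow> 'a) \<Rightarrow> (int \<Rightarrow> 'b)) \<Rightarrow> bool" where
  "conjugacy X Y f \<longleftrightarrow>
     homeomorphic_map (subtopology seq_top X) (subtopology seq_top Y) f \<and>
     (\<forall>x\<in>X. f (shift x) = shift (f x))"

definition subset_graph :: "('v,'e) pre_digraph \<Rightarrow> ('e \<Rightarrow> 'a)
      \<Rightarrow> ('v set, 'v set \<times> 'a \<times> 'v set) pre_digraph" where
  "subset_graph H L =
     \<lparr> verts = {F. F \<noteq> {} \<and> F \<subseteq> verts H},
       arcs = {(F, a, F'). F \<noteq> {} \<and> F \<subseteq> verts H \<and> a \<in> L ` arcs H \<and>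
                 F \<subseteq> {tail H e | e. e \<in> arcs H \<and> L e = a} \<and>
                 F' = {head H e | e. e \<in> arcs H \<and> tail H e \<in> F \<and> L e = a} \<and>
                 F' \<noteq> {} \<and> F' \<subseteq> verts H},
       tail = fst,
       head = (\<lambda>p. snd (snd p)) \<rparr>"

definition subset_label :: "'v set \<times> 'a \<times> 'v set \<Rightarrow> 'a" where
  "subset_label p = fst (snd p)"

definition trim_step :: "('v,'e) pre_digraph \<Rightarrow> ('v,'e) pre_digraph" where
  "trim_step G =
     (let V' = {v\<in>verts G. (\<exists>e\<in>arcs G. tail G e = v) \<and> (\<exists>e\<in>arcs G. head G e = v)}
      in G\<lparr> verts := V', arcs := {e\<in>arcs G. tail G e \<in> V' \<and> head G e \<in> V'} \<rparr>)"

definition trim :: "('v,'e) pre_digraph \<Rightarrow> ('v,'e) pre_digraph" where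
  "trim G = (let n = (LEAST n. trim_step ((trim_step ^^ n) G) = (trim_step ^^ n) G)
             in (trim_step ^^ n) G)"

definition H2 :: "('v,'e) pre_digraph \<Rightarrow> ('e \<Rightarrow> 'a)
      \<Rightarrow> ('v set, 'v set \<times> 'a \<times> 'v set) pre_digraph" where
  "H2 H L = trim (subset_graph H L)"

definition beta :: "('v,'e) pre_digraph \<Rightarrow> ('e \<Rightarrow> 'a) \<Rightarrow> (int \<Rightarrow> 'a)
      \<Rightarrow> (int \<Rightarrow> 'v set \<times> 'a \<times> 'v set)" where
  "beta H L y =
     (let F = (\<lambda>i. {tail H (k i) | k. k \<in> edge_shift H \<and> label_map L k = y})
      in (\<lambda>i. (F i, y i, F (i + 1))))"

definition edge_rel :: "('v,'e) pre_digraph \<Rightarrow> ('v \<times> 'v) set" where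
  "edge_rel G = {(tail G e, head G e) | e. e \<in> arcs G}"

definition recurrent :: "('v,'e) pre_digraph \<Rightarrow> 'v \<Rightarrow> bool" where
  "recurrent G v \<longleftrightarrow> v \<in> verts G \<and> (v, v) \<in> (edge_rel G)\<^sup>+"

definition components :: "('v,'e) pre_digraph \<Rightarrow> 'v set set" where
  "components G = {{w. recurrent G w \<and> (v, w) \<in> (edge_rel G)\<^sup>* \<and> (w, v) \<in> (edge_rel G)\<^sup>*}
                   | v. recurrent G v}"

definition induced_sub :: "('v,'e) pre_digraph \<Rightarrow> 'v set \<Rightarrow> ('v,'e) pre_digraph" where
  "induced_sub G C = G\<lparr> verts := C, arcs := {e\<in>arcs G. tail G e \<in> C \<and> head G e \<in> C} \<rparr>"

definition backward_asymptotic :: "(int \<Rightarrow> 'e) \<Rightarrow> (int \<Rightarrow> 'e) set \<Rightarrow> bool" where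
  "backward_asymptotic x X \<longleftrightarrow> (\<exists>u\<in>X. \<exists>N::int. \<forall>i\<le>N. x i = u i)"

definition Hprime_verts :: "('v,'e) pre_digraph \<Rightarrow> ('e \<Rightarrow> 'a) \<Rightarrow> 'v set set" where
  "Hprime_verts H L =
     (let K = H2 H L
      in {w. \<exists>C\<in>components K.
               (\<exists>y\<in>sofic H L. backward_asymptotic (beta H L y) (edge_shift (induced_sub K C))) \<and>
               (\<exists>v\<in>C. (v, w) \<in> (edge_rel K)\<^sup>*)})"

definition Hprime :: "('v,'e) pre_digraph \<Rightarrow> ('e \<Rightarrow> 'a)
      \<Rightarrow> ('v set, 'v set \<times> 'a \<times> 'v set) pre_digraph" where
  "Hprime H L =
     (let K = H2 H L; V = Hprime_verts H L
      in K\<lparr> verts := V, arcs := {e\<in>arcs K. tail K e \<in> V} \<rparr>)"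

text \<open>The labeling of H' is the restriction of subset_label to the arcs of H'.\<close>

end

theory Submission
  imports Defs
begin

lemma topspace_seq_top [simp]: "topspace seq_top = UNIV"
  by (simp add: seq_top_def topspace_product_topology)

lemma topspace_sub_seq [simp]: "topspace (subtopology seq_top X) = X"
  by simp

definition cyl :: "(int \<Rightarrow> 'a) \<Rightarrow> int set \<Rightarrow> (int \<Rightarrow> 'a) set" where
  "cyl c J = {x. \<forall>t\<in>J. x t = c t}"

lemma open_cyl: "finite J \<Longrightarrow> openin seq_top (cyl c J)"
  unfolding seq_top_def openin_product_topology_alt
proof (intro ballI)
  fix x assume J: "finite J" and x: "x \<in> cyl c J"
  define U where "U = (\<lambda>i. if i \<in> J then {c i} else (UNIV :: 'a set))"
  have "{i \<in> UNIV. U i \<noteq> topspace (discrete_topology UNIV)} \<subseteq> J"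
    by (auto simp: U_def)
  hence "finite {i \<in> UNIV. U i \<noteq> topspace (discrete_topology UNIV)}"
    using J finite_subset by blast
  moreover have "x \<in> Pi\<^sub>E UNIV U" using x by (auto simp: U_def cyl_def)
  moreover have "Pi\<^sub>E UNIV U \<subseteq> cyl c J" by (auto simp: U_def cyl_def PiE_def Pi_def)
  ultimately show "\<exists>U. finite {i \<in> UNIV. U i \<noteq> topspace (discrete_topology UNIV)} \<and>
             (\<forall>i\<in>UNIV. openin (discrete_topology UNIV) (U i)) \<and>
             x \<in> Pi\<^sub>E UNIV U \<and> Pi\<^sub>E UNIV U \<subseteq> cyl c J"
    by auto
qed

lemma openin_seq_by_cyl:
  assumes "\<forall>x\<in>S. \<exists>J. finite J \<and> cyl x J \<subseteq> S"
  shows "openin seq_top S"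
proof (subst openin_subopen, intro ballI)
  fix x assume "x \<in> S"
  then obtain J where "finite J" "cyl x J \<subseteq> S" using assms by blast
  moreover have "x \<in> cyl x J" by (simp add: cyl_def)
  ultimately show "\<exists>T. openin seq_top T \<and> x \<in> T \<and> T \<subseteq> S" using open_cyl by blast
qed

lemma cont_discrete_window:
  assumes win: "\<forall>x\<in>X. \<exists>J. finite J \<and> (\<forall>x'\<in>X. (\<forall>t\<in>J. x' t = x t) \<longrightarrow> g x' = g x)"
  shows "continuous_map (subtopology seq_top X) (discrete_topology UNIV) g"
  unfolding continuous_map
proof (intro conjI allI impI)
  show "g ` topspace (subtopology seq_top X) \<subseteq> topspace (discrete_topology UNIV)" by (simp only: topspace_discrete_topology subset_UNIV)
  fix U :: "'b set"
  define Jw where "Jw x = (SOME J. finite J \<and> (\<forall>x'\<in>X. (\<forall>t\<in>J. x' t = x t) \<longrightarrow> g x' = g x))" for x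
  have Jw: "finite (Jw x) \<and> (\<forall>x'\<in>X. (\<forall>t\<in>Jw x. x' t = x t) \<longrightarrow> g x' = g x)" if "x \<in> X" for x
  proof -
    have "\<exists>J. finite J \<and> (\<forall>x'\<in>X. (\<forall>t\<in>J. x' t = x t) \<longrightarrow> g x' = g x)"
      using win that by (rule bspec)
    thus ?thesis unfolding Jw_def by (rule someI_ex)
  qed
  define T where "T = \<Union>((\<lambda>x. cyl x (Jw x)) ` {x \<in> X. g x \<in> U})"
  have "openin seq_top T" unfolding T_def
  proof (rule openin_Union)
    fix S assume "S \<in> (\<lambda>x. cyl x (Jw x)) ` {x \<in> X. g x \<in> U}"
    then obtain x where "x \<in> X" "S = cyl x (Jw x)" by blast
    thus "openin seq_top S" using Jw open_cyl by blast
  qed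
  moreover have "{x \<in> topspace (subtopology seq_top X). g x \<in> U} = T \<inter> X"
  proof
    show "{x \<in> topspace (subtopology seq_top X). g x \<in> U} \<subseteq> T \<inter> X"
    proof
      fix x assume "x \<in> {x \<in> topspace (subtopology seq_top X). g x \<in> U}"
      hence x: "x \<in> X" "g x \<in> U" by auto
      have "x \<in> cyl x (Jw x)" by (simp add: cyl_def)
      thus "x \<in> T \<inter> X" using x unfolding T_def by blast
    qed
    show "T \<inter> X \<subseteq> {x \<in> topspace (subtopology seq_top X). g x \<in> U}"
    proof
      fix x' assume "x' \<in> T \<inter> X"
      then obtain x where x: "x \<in> X" "g x \<in> U" and c: "x' \<in> cyl x (Jw x)"
        and x': "x' \<in> X" unfolding T_def by blast
      have "g x' = g x" using Jw[OF x(1)] c x' by (auto simp: cyl_def)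
      thus "x' \<in> {x \<in> topspace (subtopology seq_top X). g x \<in> U}" using x x' by auto
    qed
  qed
  ultimately show "openin (subtopology seq_top X) {x \<in> topspace (subtopology seq_top X). g x \<in> U}"
    by (auto simp: openin_subtopology)
qed

lemma continuity_window:
  assumes cpt: "compactin seq_top X"
    and cont: "continuous_map (subtopology seq_top X) (discrete_topology UNIV) g"
  shows "\<exists>J. finite J \<and> (\<forall>x\<in>X. \<forall>x'\<in>X. (\<forall>t\<in>J. x t = x' t) \<longrightarrow> g x = g x')"
proof -
  have loc: "\<exists>J. finite J \<and> (\<forall>x'\<in>X. (\<forall>t\<in>J. x' t = x t) \<longrightarrow> g x' = g x)" if x: "x \<in> X" for x
  proof -
    have "openin (subtopology seq_top X) {x' \<in> topspace (subtopology seq_top X). g x' \<in> {g x}}"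
      using cont by (rule openin_continuous_map_preimage) simp
    then obtain T where T: "openin seq_top T" "{x' \<in> X. g x' = g x} = T \<inter> X"
      by (auto simp: openin_subtopology)
    have "x \<in> T" using T(2) x by blast
    then obtain U where U: "finite {i \<in> UNIV. U i \<noteq> topspace (discrete_topology (UNIV::'a set))}"
       "x \<in> Pi\<^sub>E UNIV U" "Pi\<^sub>E UNIV U \<subseteq> T"
      using T(1) unfolding seq_top_def openin_product_topology_alt by blast
    define J where "J = {i \<in> UNIV. U i \<noteq> topspace (discrete_topology (UNIV::'a set))}"
    have "\<forall>x'\<in>X. (\<forall>t\<in>J. x' t = x t) \<longrightarrow> g x' = g x"
    proof (intro ballI impI)
      fix x' assume x': "x' \<in> X" "\<forall>t\<in>J. x' t = x t"
      have "x' t \<in> U t" for t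
      proof (cases "U t = UNIV")
        case False
        then have "x' t = x t" using x'(2) by (auto simp: J_def)
        then show ?thesis using U(2) by (auto simp: PiE_def Pi_def)
      qed simp
      hence "x' \<in> Pi\<^sub>E UNIV U" by (auto simp: PiE_def Pi_def)
      hence "x' \<in> T \<inter> X" using U(3) x'(1) by blast
      thus "g x' = g x" using T(2) by blast
    qed
    thus ?thesis using U(1) J_def by blast
  qed
  define Jx where "Jx x = (SOME J. finite J \<and> (\<forall>x'\<in>X. (\<forall>t\<in>J. x' t = x t) \<longrightarrow> g x' = g x))" for x
  have Jx: "finite (Jx x) \<and> (\<forall>x'\<in>X. (\<forall>t\<in>Jx x. x' t = x t) \<longrightarrow> g x' = g x)" if "x \<in> X" for x
    unfolding Jx_def by (rule someI_ex[OF loc[OF that]])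
  have "\<exists>\<F>. finite \<F> \<and> \<F> \<subseteq> (\<lambda>x. cyl x (Jx x)) ` X \<and> X \<subseteq> \<Union>\<F>"
  proof (rule compactinD[OF cpt])
    fix S assume "S \<in> (\<lambda>x. cyl x (Jx x)) ` X"
    then obtain x where "x \<in> X" "S = cyl x (Jx x)" by blast
    thus "openin seq_top S" using Jx open_cyl by blast
  next
    show "X \<subseteq> \<Union> ((\<lambda>x. cyl x (Jx x)) ` X)"
    proof
      fix x assume "x \<in> X"
      moreover have "x \<in> cyl x (Jx x)" by (simp add: cyl_def)
      ultimately show "x \<in> \<Union> ((\<lambda>x. cyl x (Jx x)) ` X)" by blast
    qed
  qed
  then obtain F where F: "finite F" "F \<subseteq> (\<lambda>x. cyl x (Jx x)) ` X" "X \<subseteq> \<Union>F" by blast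
  obtain X0 where X0': "X0 \<subseteq> X" "finite X0" "F = (\<lambda>x. cyl x (Jx x)) ` X0"
    using finite_subset_image[OF F(1) F(2)] by blast
  have X0: "finite X0" "X0 \<subseteq> X" "X \<subseteq> \<Union>((\<lambda>x. cyl x (Jx x)) ` X0)"
    using X0' F(3) by auto
  define J where "J = \<Union>(Jx ` X0)"
  have "finite J" using X0 Jx unfolding J_def by blast
  moreover have "\<forall>x\<in>X. \<forall>x'\<in>X. (\<forall>t\<in>J. x t = x' t) \<longrightarrow> g x = g x'"
  proof (intro ballI impI)
    fix x x' assume x: "x \<in> X" "x' \<in> X" "\<forall>t\<in>J. x t = x' t"
    then obtain x0 where x0: "x0 \<in> X0" "x \<in> cyl x0 (Jx x0)" using X0(3) by blast
    have "g x = g x0" using Jx[of x0] x0 X0(2) x(1) by (auto simp: cyl_def)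
    moreover have "g x' = g x0" using Jx[of x0] x0 X0(2) x unfolding J_def cyl_def by auto
    ultimately show "g x = g x'" by simp
  qed
  ultimately show ?thesis by blast
qed

definition sh :: "int \<Rightarrow> (int \<Rightarrow> 'a) \<Rightarrow> (int \<Rightarrow> 'a)" where
  "sh p x = (\<lambda>t. x (t + p))"

lemma sh_1: "sh 1 = shift" by (rule ext) (simp add: sh_def shift_def)
lemma sh_sh [simp]: "sh p (sh q x) = sh (p + q) x" by (rule ext) (simp add: sh_def algebra_simps)
lemma sh_0 [simp]: "sh 0 x = x" by (simp add: sh_def)
lemma sh_app [simp]: "sh p x t = x (t + p)" by (simp add: sh_def)

lemma sh_commute:
  assumes inv: "\<And>x p. x \<in> X \<Longrightarrow> sh p x \<in> X"
    and comm: "\<forall>x\<in>X. f (shift x) = shift (f x)"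
    and x: "x \<in> X"
  shows "f (sh p x) = sh p (f x)"
proof -
  have pos: "f (sh (int n) x) = sh (int n) (f x)" if "x \<in> X" for n x
    using that
  proof (induction n arbitrary: x)
    case 0 then show ?case by simp
  next
    case (Suc n)
    have "sh (int (Suc n)) x = shift (sh (int n) x)"
      by (simp add: sh_1[symmetric] add.commute)
    hence "f (sh (int (Suc n)) x) = shift (f (sh (int n) x))"
      using comm inv Suc.prems by auto
    also have "\<dots> = shift (sh (int n) (f x))" by (simp only: Suc.IH[OF Suc.prems])
    also have "\<dots> = sh (int (Suc n)) (f x)" by (simp add: sh_1[symmetric] add.commute)
    finally show ?case .
  qed
  have neg: "f (sh (- int n) x) = sh (- int n) (f x)" if "x \<in> X" for n x
  proof -
    have "f (sh (int n) (sh (- int n) x)) = sh (int n) (f (sh (- int n) x))"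
      using pos inv that by blast
    hence "f x = sh (int n) (f (sh (- int n) x))" by simp
    hence "sh (- int n) (f x) = f (sh (- int n) x)" by simp
    thus ?thesis by simp
  qed
  show ?thesis
  proof (cases "p \<ge> 0")
    case True then show ?thesis using pos[OF x, of "nat p"] by simp
  next
    case False then show ?thesis using neg[OF x, of "nat (-p)"] by simp
  qed
qed

lemma uniform_window:
  assumes cpt: "compactin seq_top X"
    and cont: "continuous_map (subtopology seq_top X) (subtopology seq_top Y) f"
    and inv: "\<And>x p. x \<in> X \<Longrightarrow> sh p x \<in> X"
    and comm: "\<forall>x\<in>X. f (shift x) = shift (f x)"
  shows "\<exists>m::int. \<forall>x\<in>X. \<forall>x'\<in>X. \<forall>i. (\<forall>t. i - m \<le> t \<and> t \<le> i + m \<longrightarrow> x t = x' t) \<longrightarrow> f x i = f x' i"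
proof -
  have "continuous_map (subtopology seq_top X) (discrete_topology UNIV) (\<lambda>x. f x 0)"
  proof -
    have "continuous_map (subtopology seq_top X) seq_top f"
      using cont continuous_map_into_fulltopology by blast
    moreover have "continuous_map seq_top (discrete_topology UNIV) (\<lambda>x. x 0)"
      unfolding seq_top_def by (rule continuous_map_product_projection) simp
    ultimately show ?thesis using continuous_map_compose[unfolded o_def] by blast
  qed
  from continuity_window[OF cpt this] obtain J where J: "finite J"
    "\<forall>x\<in>X. \<forall>x'\<in>X. (\<forall>t\<in>J. x t = x' t) \<longrightarrow> f x 0 = f x' 0" by blast
  define m where "m = Max (insert 0 (abs ` J))"
  have mJ: "\<forall>t\<in>J. abs t \<le> m" unfolding m_def using J(1) by simp
  show ?thesis
  proof (intro exI ballI allI impI)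
    fix x x' i assume xs: "x \<in> X" "x' \<in> X" and agree: "\<forall>t. i - m \<le> t \<and> t \<le> i + m \<longrightarrow> x t = x' t"
    have "\<forall>t\<in>J. sh i x t = sh i x' t"
      using agree mJ by (auto simp: abs_le_iff)
    hence "f (sh i x) 0 = f (sh i x') 0" using J(2) inv xs by blast
    thus "f x i = f x' i" using sh_commute[OF inv comm] xs by simp
  qed
qed

lemma compact_edge_shift:
  assumes "finite (arcs K)"
  shows "compactin seq_top (edge_shift K)"
proof (rule closed_compactin)
  show "compactin seq_top (Pi\<^sub>E UNIV (\<lambda>_. arcs K))"
    unfolding seq_top_def compactin_PiE using assms by (simp add: finite_imp_compactin)
  show "edge_shift K \<subseteq> Pi\<^sub>E UNIV (\<lambda>_. arcs K)" by (auto simp: edge_shift_def)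
  show "closedin seq_top (edge_shift K)"
    unfolding closedin_def
  proof (intro conjI)
    show "edge_shift K \<subseteq> topspace seq_top" by simp
    show "openin seq_top (topspace seq_top - edge_shift K)"
    proof (rule openin_seq_by_cyl, intro ballI)
      fix x assume "x \<in> topspace seq_top - edge_shift K"
      then obtain i where i: "x i \<notin> arcs K \<or> head K (x i) \<noteq> tail K (x (i + 1))"
        by (auto simp: edge_shift_def)
      have "cyl x {i, i+1} \<subseteq> topspace seq_top - edge_shift K"
      proof (rule subsetI)
        fix xa assume xa: "xa \<in> cyl x {i, i+1}"
        have "xa \<notin> edge_shift K"
        proof
          assume "xa \<in> edge_shift K"
          hence "xa i \<in> arcs K \<and> head K (xa i) = tail K (xa (i + 1))" by (auto simp: edge_shift_def)
          moreover have "xa i = x i" "xa (i+1) = x (i+1)" using xa by (auto simp: cyl_def)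
          ultimately show False using i by simp
        qed
        thus "xa \<in> topspace seq_top - edge_shift K" by simp
      qed
      moreover have "finite {i, i+1}" by simp
      ultimately show "\<exists>J. finite J \<and> cyl x J \<subseteq> topspace seq_top - edge_shift K" by blast
    qed
  qed
qed

abbreviation lab :: "(int \<Rightarrow> 'v set \<times> 'a \<times> 'v set) \<Rightarrow> int \<Rightarrow> 'a" where
  "lab x \<equiv> label_map subset_label x"
abbreviation XS :: "('v,'e) pre_digraph \<Rightarrow> ('e \<Rightarrow> 'a) \<Rightarrow> (int \<Rightarrow> 'v set \<times> 'a \<times> 'v set) set" where
  "XS G L \<equiv> edge_shift (subset_graph G L)"

lemma lab_app [simp]: "label_map L x i = L (x i)" by (simp add: label_map_def)
lemma subset_label_app [simp]: "subset_label (F, a, F') = a" by (simp add: subset_label_def)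

lemma graph_ok_wf: "graph_ok G \<Longrightarrow> e \<in> arcs G \<Longrightarrow> tail G e \<in> verts G \<and> head G e \<in> verts G"
  unfolding graph_ok_def fin_digraph_def by (auto intro: wf_digraph.tail_in_verts wf_digraph.head_in_verts)

lemma graph_ok_fin: "graph_ok G \<Longrightarrow> finite (verts G) \<and> finite (arcs G)"
  unfolding graph_ok_def fin_digraph_def fin_digraph_axioms_def by auto

lemma sg_tail [simp]: "tail (subset_graph G L) = fst" by (simp add: subset_graph_def)
lemma sg_head [simp]: "head (subset_graph G L) = (\<lambda>p. snd (snd p))" by (simp add: subset_graph_def)

lemma sg_step:
  assumes "x \<in> XS G L"
  shows "fst (x i) \<noteq> {}" "fst (x i) \<subseteq> verts G" "lab x i \<in> L ` arcs G"
    "fst (x i) \<subseteq> {tail G e |e. e \<in> arcs G \<and> L e = lab x i}"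
    "fst (x (i+1)) = {head G e |e. e \<in> arcs G \<and> tail G e \<in> fst (x i) \<and> L e = lab x i}"
    "x i = (fst (x i), lab x i, fst (x (i+1)))"
proof -
  have a: "x i \<in> arcs (subset_graph G L)" and h: "snd (snd (x i)) = fst (x (i+1))"
    using assms by (auto simp: edge_shift_def)
  obtain F a F' where xi: "x i = (F, a, F')" by (cases "x i") auto
  from a h xi show "fst (x i) \<noteq> {}" "fst (x i) \<subseteq> verts G" "lab x i \<in> L ` arcs G"
    "fst (x i) \<subseteq> {tail G e |e. e \<in> arcs G \<and> L e = lab x i}"
    "fst (x (i+1)) = {head G e |e. e \<in> arcs G \<and> tail G e \<in> fst (x i) \<and> L e = lab x i}"
    "x i = (fst (x i), lab x i, fst (x (i+1)))"
    by (auto simp: subset_graph_def)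
qed

lemma sg_intro:
  assumes "\<And>i. T i \<noteq> {}" "\<And>i. T i \<subseteq> verts G" "\<And>i. y i \<in> L ` arcs G"
    "\<And>i. T i \<subseteq> {tail G e |e. e \<in> arcs G \<and> L e = y i}"
    "\<And>i. T (i+1) = {head G e |e. e \<in> arcs G \<and> tail G e \<in> T i \<and> L e = y i}"
  shows "(\<lambda>i. (T i, y i, T (i+1))) \<in> XS G L"
  unfolding edge_shift_def
proof (intro CollectI allI conjI)
  fix i
  show "(T i, y i, T (i + 1)) \<in> arcs (subset_graph G L)"
    using assms(1)[of i] assms(1)[of "i+1"] assms(2)[of i] assms(2)[of "i+1"] assms(3)[of i]
      assms(4)[of i] assms(5)[of i]
    by (simp add: subset_graph_def)
  show "head (subset_graph G L) (T i, y i, T (i + 1)) = tail (subset_graph G L) (T (i + 1), y (i + 1), T (i + 1 + 1))"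
    by simp
qed

lemma sg_extend:
  assumes x: "x \<in> XS G L" and v: "v \<in> fst (x i)"
  shows "\<exists>k \<in> edge_shift G. label_map L k = lab x \<and> (\<forall>j. tail G (k j) \<in> fst (x j)) \<and> tail G (k i) = v"
proof -
  define nx where "nx j u = (SOME e. e \<in> arcs G \<and> tail G e = u \<and> L e = lab x j)" for j u
  have nx: "nx j u \<in> arcs G \<and> tail G (nx j u) = u \<and> L (nx j u) = lab x j \<and> head G (nx j u) \<in> fst (x (j+1))"
    if "u \<in> fst (x j)" for j u
  proof -
    have ex: "\<exists>e. e \<in> arcs G \<and> tail G e = u \<and> L e = lab x j" using sg_step(4)[OF x, of j] that by blast
    have e: "nx j u \<in> arcs G \<and> tail G (nx j u) = u \<and> L (nx j u) = lab x j"
      unfolding nx_def by (rule someI_ex[OF ex])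
    moreover have "head G (nx j u) \<in> fst (x (j+1))"
    proof -
      have P: "nx j u \<in> arcs G \<and> tail G (nx j u) \<in> fst (x j) \<and> L (nx j u) = lab x j" using e that by simp
      show ?thesis unfolding sg_step(5)[OF x, of j] using P by blast
    qed
    ultimately show ?thesis by blast
  qed
  define pv where "pv j u = (SOME e. e \<in> arcs G \<and> tail G e \<in> fst (x j) \<and> L e = lab x j \<and> head G e = u)" for j u
  have pv: "pv j u \<in> arcs G \<and> tail G (pv j u) \<in> fst (x j) \<and> L (pv j u) = lab x j \<and> head G (pv j u) = u"
    if "u \<in> fst (x (j+1))" for j u
  proof -
    have "u \<in> {head G e |e. e \<in> arcs G \<and> tail G e \<in> fst (x j) \<and> L e = lab x j}"
      using that sg_step(5)[OF x, of j] by simp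
    then have ex: "\<exists>e. e \<in> arcs G \<and> tail G e \<in> fst (x j) \<and> L e = lab x j \<and> head G e = u"
      by auto
    show ?thesis unfolding pv_def by (rule someI_ex[OF ex])
  qed
  define fw where "fw = rec_nat v (\<lambda>n u. head G (nx (i + int n) u))"
  define bw where "bw = rec_nat v (\<lambda>n u. tail G (pv (i - int n - 1) u))"
  have fw0: "fw 0 = v" and fwS: "fw (Suc n) = head G (nx (i + int n) (fw n))" for n
    by (simp_all add: fw_def)
  have bw0: "bw 0 = v" and bwS: "bw (Suc n) = tail G (pv (i - int n - 1) (bw n))" for n
    by (simp_all add: bw_def)
  have fw_in: "fw n \<in> fst (x (i + int n))" for n
  proof (induction n)
    case 0 then show ?case using v fw0 by simp
  next
    case (Suc n)
    have "head G (nx (i + int n) (fw n)) \<in> fst (x (i + int n + 1))" using nx[OF Suc.IH] by blast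
    thus ?case by (simp add: fwS algebra_simps)
  qed
  have bw_in: "bw n \<in> fst (x (i - int n))" for n
  proof (induction n)
    case 0 then show ?case using v bw0 by simp
  next
    case (Suc n)
    have "bw n \<in> fst (x ((i - int n - 1) + 1))" using Suc.IH by simp
    hence "tail G (pv (i - int n - 1) (bw n)) \<in> fst (x (i - int n - 1))" using pv by blast
    thus ?case by (simp add: bwS algebra_simps)
  qed
  define k where "k j = (if i \<le> j then nx j (fw (nat (j - i))) else pv j (bw (nat (i - j - 1))))" for j
  have kf: "k (i + int n) = nx (i + int n) (fw n)" for n by (simp add: k_def)
  have kb: "k (i - int n - 1) = pv (i - int n - 1) (bw n)" for n by (simp add: k_def)
  have kprops: "k j \<in> arcs G \<and> L (k j) = lab x j \<and> tail G (k j) \<in> fst (x j) \<and> head G (k j) = tail G (k (j+1))" for j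
  proof (cases "i \<le> j")
    case True
    then obtain n where "j - i = int n" using nonneg_int_cases[of "j - i"] by auto
    hence n: "j = i + int n" by simp
    have f: "fw n \<in> fst (x j)" using fw_in n by simp
    have "k (j+1) = nx (i + int (Suc n)) (fw (Suc n))" using kf[of "Suc n"] n by (simp add: algebra_simps)
    hence "tail G (k (j+1)) = fw (Suc n)" using nx[OF fw_in[of "Suc n"]] by simp
    moreover have "k j = nx j (fw n)" using kf n by simp
    ultimately show ?thesis using nx[OF f] fwS n f by simp
  next
    case False
    then obtain n where "i - j - 1 = int n" using nonneg_int_cases[of "i - j - 1"] by auto
    hence n: "j = i - int n - 1" by simp
    have b: "bw n \<in> fst (x (j+1))" using bw_in n by simp
    have kj: "k j = pv j (bw n)" using kb n by simp
    have "tail G (k (j+1)) = bw n"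
    proof (cases n)
      case 0
      have jj: "j + 1 = i" using n 0 by simp
      have "k (j+1) = nx i (fw 0)" unfolding jj using kf[of 0] by simp
      thus ?thesis using nx[of v i] v fw0 bw0 0 by simp
    next
      case (Suc n')
      have jj: "j + 1 = i - int n' - 1" using n Suc by simp
      have "k (j+1) = pv (i - int n' - 1) (bw n')" unfolding jj by (rule kb)
      moreover have "bw n' \<in> fst (x ((i - int n' - 1) + 1))" using bw_in[of n'] by simp
      ultimately show ?thesis using pv bwS Suc by simp
    qed
    thus ?thesis using pv[OF b] kj by simp
  qed
  have "k \<in> edge_shift G" using kprops by (simp add: edge_shift_def)
  moreover have "label_map L k = lab x" using kprops by (simp add: fun_eq_iff)
  moreover have "tail G (k i) = v" using kf[of 0] nx[of v i] v fw0 by simp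
  ultimately show ?thesis using kprops by blast
qed

lemma rr_agree:
  assumes rr: "right_resolving G L" and k: "k \<in> edge_shift G" "k' \<in> edge_shift G"
    and t0: "tail G (k a) = tail G (k' a)"
    and lb: "\<And>s. a \<le> s \<Longrightarrow> s \<le> b \<Longrightarrow> L (k s) = L (k' s)"
    and t: "a \<le> t" "t \<le> b"
  shows "k t = k' t"
proof -
  have ar: "k s \<in> arcs G" "k' s \<in> arcs G" "head G (k s) = tail G (k (s+1))" "head G (k' s) = tail G (k' (s+1))" for s
    using k by (auto simp: edge_shift_def)
  have eq: "a + int n \<le> b \<longrightarrow> k (a + int n) = k' (a + int n)" for n
  proof (induction n)
    case 0
    show ?case using rr ar t0 lb[of a] unfolding right_resolving_def by auto
  next
    case (Suc n)
    show ?case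
    proof
      assume le: "a + int (Suc n) \<le> b"
      hence "k (a + int n) = k' (a + int n)" using Suc by simp
      hence "tail G (k (a + int n + 1)) = tail G (k' (a + int n + 1))" using ar by metis
      moreover have "L (k (a + int n + 1)) = L (k' (a + int n + 1))" using lb le by simp
      ultimately have "k (a + int n + 1) = k' (a + int n + 1)"
        using rr ar unfolding right_resolving_def by blast
      thus "k (a + int (Suc n)) = k' (a + int (Suc n))" by (simp add: algebra_simps)
    qed
  qed
  from t obtain n where "t - a = int n" using nonneg_int_cases[of "t - a"] by auto
  hence "t = a + int n" by simp
  thus ?thesis using eq t by simp
qed

definition Pm :: "('w,'f) pre_digraph \<Rightarrow> (int \<Rightarrow> 'f) set \<Rightarrow> (int \<Rightarrow> 'b) \<Rightarrow> (int \<Rightarrow> 'w set \<times> 'b \<times> 'w set)" where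
  "Pm H Sg y = (\<lambda>j. ({tail H (m j) | m. m \<in> Sg}, y j, {tail H (m (j+1)) | m. m \<in> Sg}))"

lemma lab_Pm [simp]: "lab (Pm H Sg y) = y"
  by (simp add: Pm_def label_map_def subset_label_def)

lemma fst_Pm [simp]: "fst (Pm H Sg y j) = {tail H (m j) | m. m \<in> Sg}"
  by (simp add: Pm_def)

lemma Pm_in:
  assumes ok: "graph_ok H" and rr: "right_resolving H L" and sub: "Sg \<subseteq> edge_shift H"
    and ne: "Sg \<noteq> {}" and lb: "\<And>m. m \<in> Sg \<Longrightarrow> label_map L m = y"
  shows "Pm H Sg y \<in> XS H L"
proof -
  have ar: "m \<in> Sg \<Longrightarrow> m s \<in> arcs H \<and> head H (m s) = tail H (m (s+1))" for m s
    using sub by (auto simp: edge_shift_def)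
  have ly: "m \<in> Sg \<Longrightarrow> L (m s) = y s" for m s using lb by (metis lab_app)
  have "(\<lambda>i. ({tail H (m i) | m. m \<in> Sg}, y i, {tail H (m (i+1)) | m. m \<in> Sg})) \<in> XS H L"
  proof (rule sg_intro[where T = "\<lambda>i. {tail H (m i) | m. m \<in> Sg}"])
    fix i
    show "{tail H (m i) |m. m \<in> Sg} \<noteq> {}" using ne by blast
    show "{tail H (m i) |m. m \<in> Sg} \<subseteq> verts H" using ar graph_ok_wf[OF ok] by blast
    show "y i \<in> L ` arcs H" using ne ar ly by (metis all_not_in_conv image_eqI)
    show "{tail H (m i) |m. m \<in> Sg} \<subseteq> {tail H e |e. e \<in> arcs H \<and> L e = y i}" using ar ly by blast
    show "{tail H (m (i + 1)) |m. m \<in> Sg} =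
        {head H e |e. e \<in> arcs H \<and> tail H e \<in> {tail H (m i) |m. m \<in> Sg} \<and> L e = y i}"
    proof
      show "{tail H (m (i + 1)) |m. m \<in> Sg} \<subseteq> {head H e |e. e \<in> arcs H \<and> tail H e \<in> {tail H (m i) |m. m \<in> Sg} \<and> L e = y i}"
      proof
        fix u assume "u \<in> {tail H (m (i + 1)) |m. m \<in> Sg}"
        then obtain m where m: "u = tail H (m (i + 1))" "m \<in> Sg" by blast
        have P: "m i \<in> arcs H \<and> tail H (m i) \<in> {tail H (m i) |m. m \<in> Sg} \<and> L (m i) = y i"
          using ar[OF m(2)] ly[OF m(2)] m(2) by blast
        have "u = head H (m i)" using ar[OF m(2), of i] m(1) by simp
        thus "u \<in> {head H e |e. e \<in> arcs H \<and> tail H e \<in> {tail H (m i) |m. m \<in> Sg} \<and> L e = y i}"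
          using P by blast
      qed
      show "{head H e |e. e \<in> arcs H \<and> tail H e \<in> {tail H (m i) |m. m \<in> Sg} \<and> L e = y i} \<subseteq> {tail H (m (i + 1)) |m. m \<in> Sg}"
      proof
        fix u assume "u \<in> {head H e |e. e \<in> arcs H \<and> tail H e \<in> {tail H (m i) |m. m \<in> Sg} \<and> L e = y i}"
        then obtain e m where e: "u = head H e" "e \<in> arcs H" "tail H e = tail H (m i)" "m \<in> Sg" "L e = y i"
          by blast
        have "e = m i" using rr e ar[OF e(4)] ly[OF e(4)] unfolding right_resolving_def by metis
        thus "u \<in> {tail H (m (i + 1)) |m. m \<in> Sg}" using e ar by blast
      qed
    qed
  qed
  thus ?thesis by (simp add: Pm_def)
qed

lemma beta_Pm: "beta H L y = Pm H {k \<in> edge_shift H. label_map L k = y} y"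
  unfolding beta_def Pm_def Let_def by (rule ext) auto

definition SS :: "('v,'e) pre_digraph \<Rightarrow> ('e \<Rightarrow> 'a) \<Rightarrow> (int \<Rightarrow> 'v set \<times> 'a \<times> 'v set) \<Rightarrow> (int \<Rightarrow> 'e) set" where
  "SS G L x = {k \<in> edge_shift G. label_map L k = lab x \<and> (\<forall>j. tail G (k j) \<in> fst (x j))}"

lemma SS_tails: "x \<in> XS G L \<Longrightarrow> {tail G (k j) | k. k \<in> SS G L x} = fst (x j)"
  using sg_extend[of x G L _ j] unfolding SS_def by blast

lemma SS_ne: "x \<in> XS G L \<Longrightarrow> SS G L x \<noteq> {}"
  using SS_tails[of x G L 0] sg_step(1)[of x G L 0] by auto

lemma Pm_SS: "x \<in> XS G L \<Longrightarrow> Pm G (SS G L x) (lab x) = x"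
  unfolding Pm_def
  apply (rule ext)
  apply (subst SS_tails, assumption)+
  using sg_step(6) by metis

lemma lab_sofic:
  assumes "x \<in> XS G L" shows "lab x \<in> sofic G L"
proof -
  obtain k where "k \<in> SS G L x" using SS_ne[OF assms] by blast
  hence "k \<in> edge_shift G" "label_map L k = lab x" by (auto simp: SS_def)
  thus ?thesis unfolding sofic_def by (metis image_eqI)
qed

lemma beta_in:
  assumes "graph_ok G" "right_resolving G L" "y \<in> sofic G L"
  shows "beta G L y \<in> XS G L"
  unfolding beta_Pm
  by (rule Pm_in) (use assms in \<open>auto simp: sofic_def\<close>)

lemma lab_beta [simp]: "lab (beta G L y) = y"
  by (simp add: beta_Pm)

lemma es_sh: "k \<in> edge_shift G \<Longrightarrow> sh p k \<in> edge_shift G"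
  unfolding edge_shift_def by (auto simp: algebra_simps)

lemma es_shift: "k \<in> edge_shift G \<Longrightarrow> shift k \<in> edge_shift G"
  using es_sh[of k G 1] by (simp add: sh_1)

lemma label_sh: "label_map L (sh p k) = sh p (label_map L k)"
  by (simp add: label_map_def sh_def)

lemma label_shift: "label_map L (shift k) = shift (label_map L k)"
  by (simp add: label_map_def shift_def)

lemma sofic_sh:
  assumes "y \<in> sofic G L" shows "sh p y \<in> sofic G L"
proof -
  obtain k where k: "k \<in> edge_shift G" "y = label_map L k" using assms unfolding sofic_def by blast
  hence "sh p k \<in> edge_shift G" "sh p y = label_map L (sh p k)" using es_sh label_sh by metis+
  thus ?thesis unfolding sofic_def by blast
qed

lemma beta_sh: "beta G L (sh p y) = sh p (beta G L y)"
proof -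
  have "{tail G (k i) | k. k \<in> edge_shift G \<and> label_map L k = sh p y} =
        {tail G (k (i + p)) | k. k \<in> edge_shift G \<and> label_map L k = y}" for i
  proof
    show "{tail G (k i) | k. k \<in> edge_shift G \<and> label_map L k = sh p y} \<subseteq>
        {tail G (k (i + p)) | k. k \<in> edge_shift G \<and> label_map L k = y}"
    proof
      fix u assume "u \<in> {tail G (k i) | k. k \<in> edge_shift G \<and> label_map L k = sh p y}"
      then obtain k where k: "u = tail G (k i)" "k \<in> edge_shift G" "label_map L k = sh p y" by blast
      have "sh (-p) k \<in> edge_shift G" using es_sh k by blast
      moreover have "label_map L (sh (-p) k) = y" using k(3) by (simp add: label_sh)
      moreover have "u = tail G (sh (-p) k (i + p))" using k by simp
      ultimately show "u \<in> {tail G (k (i + p)) | k. k \<in> edge_shift G \<and> label_map L k = y}" by blast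
    qed
    show "{tail G (k (i + p)) | k. k \<in> edge_shift G \<and> label_map L k = y} \<subseteq>
        {tail G (k i) | k. k \<in> edge_shift G \<and> label_map L k = sh p y}"
    proof
      fix u assume "u \<in> {tail G (k (i + p)) | k. k \<in> edge_shift G \<and> label_map L k = y}"
      then obtain k where k: "u = tail G (k (i + p))" "k \<in> edge_shift G" "label_map L k = y" by blast
      have "sh p k \<in> edge_shift G" using es_sh k by blast
      moreover have "label_map L (sh p k) = sh p y" using k(3) by (simp add: label_sh)
      moreover have "u = tail G (sh p k i)" using k by simp
      ultimately show "u \<in> {tail G (k i) | k. k \<in> edge_shift G \<and> label_map L k = sh p y}" by blast
    qed
  qed
  thus ?thesis unfolding beta_def Let_def sh_def by (auto simp: algebra_simps)
qed

lemma beta_max: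
  assumes w: "w \<in> XS G L" and y: "lab w = y"
  shows "fst (w t) \<subseteq> fst (beta G L y t)"
proof
  fix v assume "v \<in> fst (w t)"
  from sg_extend[OF w this] obtain k where "k \<in> edge_shift G" "label_map L k = y" "tail G (k t) = v"
    using y by blast
  thus "v \<in> fst (beta G L y t)" unfolding beta_def Let_def by auto
qed

lemma sg_mono:
  assumes w1: "w1 \<in> XS G L" and w2: "w2 \<in> XS G L"
    and lb: "\<And>s. t \<le> s \<Longrightarrow> lab w1 s = lab w2 s"
    and sub: "fst (w1 t) \<subseteq> fst (w2 t)"
    and s: "t \<le> s"
  shows "fst (w1 s) \<subseteq> fst (w2 s)"
proof -
  have "fst (w1 (t + int n)) \<subseteq> fst (w2 (t + int n))" for n
  proof (induction n)
    case 0 then show ?case using sub by simp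
  next
    case (Suc n)
    have "fst (w1 (t + int n + 1)) \<subseteq> fst (w2 (t + int n + 1))"
      unfolding sg_step(5)[OF w1, of "t + int n"] sg_step(5)[OF w2, of "t + int n"]
      using Suc lb[of "t + int n"] by auto
    thus ?case by (simp add: algebra_simps)
  qed
  moreover obtain n where "s - t = int n" using s nonneg_int_cases[of "s - t"] by auto
  hence "s = t + int n" by simp
  ultimately show ?thesis by simp
qed

definition wfg :: "('v,'e) pre_digraph \<Rightarrow> bool" where
  "wfg G \<longleftrightarrow> (\<forall>e\<in>arcs G. tail G e \<in> verts G \<and> head G e \<in> verts G)"

lemma trim_step_fields [simp]: "tail (trim_step G) = tail G" "head (trim_step G) = head G"
  by (simp_all add: trim_step_def Let_def)

lemma trim_step_sub: "verts (trim_step G) \<subseteq> verts G" "arcs (trim_step G) \<subseteq> arcs G"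
  by (auto simp: trim_step_def Let_def)

lemma trim_step_wfg: "wfg (trim_step G)"
  by (auto simp: wfg_def trim_step_def Let_def)

lemma trim_step_es:
  assumes "wfg G" shows "edge_shift (trim_step G) = edge_shift G"
proof
  show "edge_shift (trim_step G) \<subseteq> edge_shift G"
    using trim_step_sub(2)[of G] by (auto simp: edge_shift_def)
  show "edge_shift G \<subseteq> edge_shift (trim_step G)"
  proof
    fix x assume x: "x \<in> edge_shift G"
    have a: "x i \<in> arcs G" "head G (x i) = tail G (x (i + 1))" for i
      using x by (auto simp: edge_shift_def)
    have tv: "tail G (x i) \<in> verts G \<and> (\<exists>e\<in>arcs G. tail G e = tail G (x i)) \<and> (\<exists>e\<in>arcs G. head G e = tail G (x i))" for i
    proof -
      have "head G (x (i - 1)) = tail G (x i)" using a(2)[of "i - 1"] by simp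
      thus ?thesis using a(1)[of i] a(1)[of "i - 1"] assms unfolding wfg_def by blast
    qed
    show "x \<in> edge_shift (trim_step G)"
      unfolding edge_shift_def trim_step_def Let_def
      using a tv by simp
  qed
qed

lemma funpow_trim:
  assumes "wfg G"
  shows "tail ((trim_step ^^ n) G) = tail G \<and> head ((trim_step ^^ n) G) = head G \<and>
    verts ((trim_step ^^ n) G) \<subseteq> verts G \<and> arcs ((trim_step ^^ n) G) \<subseteq> arcs G \<and>
    wfg ((trim_step ^^ n) G) \<and> edge_shift ((trim_step ^^ n) G) = edge_shift G"
proof (induction n)
  case 0 then show ?case using assms by simp
next
  case (Suc n)
  then show ?case using trim_step_sub[of "(trim_step ^^ n) G"] trim_step_wfg
      trim_step_es[of "(trim_step ^^ n) G"] by auto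
qed

lemma trim_props:
  assumes "wfg G"
  shows "tail (trim G) = tail G \<and> head (trim G) = head G \<and>
    verts (trim G) \<subseteq> verts G \<and> arcs (trim G) \<subseteq> arcs G \<and>
    wfg (trim G) \<and> edge_shift (trim G) = edge_shift G"
  unfolding trim_def Let_def using funpow_trim[OF assms] by blast

lemma sg_wfg: "wfg (subset_graph G L)"
  by (auto simp: wfg_def subset_graph_def)

lemma H2_props:
  "tail (H2 G L) = fst" "head (H2 G L) = (\<lambda>p. snd (snd p))"
  "verts (H2 G L) \<subseteq> verts (subset_graph G L)" "arcs (H2 G L) \<subseteq> arcs (subset_graph G L)"
  "wfg (H2 G L)" "edge_shift (H2 G L) = XS G L"
  unfolding H2_def using trim_props[OF sg_wfg, of G L] by auto

lemma H2_fin: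
  assumes "graph_ok G" shows "finite (verts (H2 G L))" "finite (arcs (H2 G L))"
proof -
  have fv: "finite (verts G)" and fa: "finite (arcs G)" using graph_ok_fin[OF assms] by auto
  have "verts (subset_graph G L) \<subseteq> Pow (verts G)" by (auto simp: subset_graph_def)
  thus "finite (verts (H2 G L))" using H2_props(3) fv by (meson finite_Pow_iff finite_subset)
  have "arcs (subset_graph G L) \<subseteq> Pow (verts G) \<times> (L ` arcs G) \<times> Pow (verts G)"
    by (auto simp: subset_graph_def)
  moreover have "finite (Pow (verts G) \<times> (L ` arcs G) \<times> Pow (verts G))" using fv fa by simp
  ultimately show "finite (arcs (H2 G L))" using H2_props(4) by (meson finite_subset)
qed

lemma Hprime_verts_eq:
  "Hprime_verts G L = {w. \<exists>C\<in>components (H2 G L).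
      (\<exists>y\<in>sofic G L. backward_asymptotic (beta G L y) (edge_shift (induced_sub (H2 G L) C))) \<and>
      (\<exists>v\<in>C. (v, w) \<in> (edge_rel (H2 G L))\<^sup>*)}"
  by (simp add: Hprime_verts_def Let_def)

lemma Hprime_fields:
  "tail (Hprime G L) = fst" "head (Hprime G L) = (\<lambda>p. snd (snd p))"
  "arcs (Hprime G L) = {e \<in> arcs (H2 G L). fst e \<in> Hprime_verts G L}"
  by (simp_all add: Hprime_def Let_def H2_props)

lemma es_Hprime: "edge_shift (Hprime G L) = {x \<in> XS G L. \<forall>i. fst (x i) \<in> Hprime_verts G L}"
  using H2_props(6)[of G L] unfolding edge_shift_def Hprime_fields H2_props(1,2)
  by (auto simp: H2_props)

lemma Hprime_fin: "graph_ok G \<Longrightarrow> finite (arcs (Hprime G L))"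
  unfolding Hprime_fields using H2_fin(2) by (metis (no_types, lifting) finite_subset mem_Collect_eq subsetI)

lemma es_reach:
  assumes z: "z \<in> edge_shift K" and ij: "i \<le> j"
  shows "(tail K (z i), tail K (z j)) \<in> (edge_rel K)\<^sup>*"
proof -
  have st: "(tail K (z s), tail K (z (s + 1))) \<in> edge_rel K" for s
  proof -
    have "z s \<in> arcs K" "head K (z s) = tail K (z (s+1))" using z by (auto simp: edge_shift_def)
    thus ?thesis unfolding edge_rel_def by (metis (mono_tags, lifting) mem_Collect_eq)
  qed
  have "(tail K (z i), tail K (z (i + int n))) \<in> (edge_rel K)\<^sup>*" for n
  proof (induction n)
    case 0 then show ?case by simp
  next
    case (Suc n)
    have s1: "(tail K (z (i + int n)), tail K (z (i + int n + 1))) \<in> edge_rel K" by (rule st)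
    have "(tail K (z i), tail K (z (i + int n + 1))) \<in> (edge_rel K)\<^sup>*"
      by (rule rtrancl_into_rtrancl[OF Suc.IH s1])
    thus ?case by (simp add: algebra_simps)
  qed
  moreover obtain n where "j - i = int n" using ij nonneg_int_cases[of "j - i"] by auto
  ultimately show ?thesis by (metis add_diff_cancel_left' add_diff_eq diff_add_cancel)
qed

lemma es_reach_plus:
  assumes z: "z \<in> edge_shift K" and ij: "i < j"
  shows "(tail K (z i), tail K (z j)) \<in> (edge_rel K)\<^sup>+"
proof -
  have "z i \<in> arcs K" "head K (z i) = tail K (z (i+1))" using z by (auto simp: edge_shift_def)
  hence "(tail K (z i), tail K (z (i + 1))) \<in> edge_rel K" unfolding edge_rel_def by (metis (mono_tags, lifting) mem_Collect_eq)
  moreover have "(tail K (z (i+1)), tail K (z j)) \<in> (edge_rel K)\<^sup>*" using es_reach[OF z] ij by simp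
  ultimately show ?thesis by (rule rtrancl_into_trancl2)
qed

lemma mod_succ_cases:
  fixes a q :: int assumes "q > 0"
  shows "(a + 1) mod q = (if a mod q + 1 = q then 0 else a mod q + 1)"
proof -
  have r: "0 \<le> a mod q" "a mod q < q" using assms by simp_all
  have "(a + 1) mod q = (a mod q + 1) mod q" by (simp add: mod_add_left_eq)
  thus ?thesis using r by (auto simp: mod_pos_pos_trivial)
qed

lemma tail_component:
  assumes fin: "finite (verts K)" and wf: "wfg K" and z: "z \<in> edge_shift K"
  shows "\<exists>C \<in> components K. \<exists>N. (\<forall>i\<le>N. tail K (z i) \<in> C) \<and>
            backward_asymptotic z (edge_shift (induced_sub K C))"
proof -
  let ?R = "edge_rel K"
  have za: "z i \<in> arcs K" "head K (z i) = tail K (z (i+1))" for i using z by (auto simp: edge_shift_def)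
  have zt: "tail K (z i) \<in> verts K" for i using za(1)[of i] wf unfolding wfg_def by blast
  define W where "W = {v \<in> verts K. \<forall>N. \<exists>i\<le>N. tail K (z i) = v}"
  have "\<forall>v \<in> verts K - W. \<exists>N. \<forall>i\<le>N. tail K (z i) \<noteq> v" unfolding W_def by auto
  then obtain Nf where Nf: "\<forall>v \<in> verts K - W. \<forall>i\<le>Nf v. tail K (z i) \<noteq> v" by metis
  define N0 where "N0 = Min (insert 0 (Nf ` (verts K - W)))"
  have N0le: "N0 \<le> Nf v" if "v \<in> verts K - W" for v
    unfolding N0_def using fin that by simp
  have inW: "tail K (z i) \<in> W" if "i \<le> N0" for i
  proof (rule ccontr)
    assume "tail K (z i) \<notin> W"
    hence vW: "tail K (z i) \<in> verts K - W" using zt by blast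
    hence "i \<le> Nf (tail K (z i))" using N0le[OF vW] that by simp
    hence "tail K (z i) \<noteq> tail K (z i)" using Nf vW by blast
    thus False by simp
  qed
  have occ: "\<exists>i\<le>N. tail K (z i) = v" if "v \<in> W" for v N using that by (simp add: W_def)
  define v0 where "v0 = tail K (z N0)"
  have v0W: "v0 \<in> W" using inW v0_def by simp
  obtain i0 where i0: "i0 \<le> N0 - 1" "tail K (z i0) = v0" using occ[OF v0W, of "N0 - 1"] by blast
  define C where "C = {w. recurrent K w \<and> (v0, w) \<in> ?R\<^sup>* \<and> (w, v0) \<in> ?R\<^sup>*}"
  have inC: "tail K (z i) \<in> C" if iN: "i \<le> N0" for i
  proof -
    have wW: "tail K (z i) \<in> W" using inW iN by blast
    obtain i1 where i1: "i1 \<le> i - 1" "tail K (z i1) = tail K (z i)" using occ[OF wW, of "i - 1"] by blast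
    have "(tail K (z i1), tail K (z i)) \<in> ?R\<^sup>+" using es_reach_plus[OF z] i1(1) by simp
    hence rec: "recurrent K (tail K (z i))" using i1(2) zt unfolding recurrent_def by simp
    obtain i3 where i3: "i3 \<le> i" "tail K (z i3) = v0" using occ[OF v0W, of i] by blast
    have "(v0, tail K (z i)) \<in> ?R\<^sup>*" using es_reach[OF z i3(1)] i3(2) by simp
    moreover have "(tail K (z i), v0) \<in> ?R\<^sup>*" using es_reach[OF z iN] v0_def by simp
    ultimately show ?thesis using rec unfolding C_def by blast
  qed
  have v0rec: "recurrent K v0" using inC[of N0] v0_def C_def by simp
  have Ccomp: "C \<in> components K" unfolding components_def C_def using v0rec by blast
  have zC: "z t \<in> arcs K \<and> tail K (z t) \<in> C \<and> head K (z t) \<in> C" if "t < N0" for t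
    using za[of t] inC[of t] inC[of "t+1"] that by simp
  define q where "q = N0 - i0"
  have q: "q > 0" using i0 q_def by simp
  define u where "u t = (if t < N0 then z t else z (i0 + (t - N0) mod q))" for t
  have ur: "u t = z (i0 + (t - N0) mod q)" "i0 + (t - N0) mod q < N0" if "N0 \<le> t" for t
  proof -
    show "u t = z (i0 + (t - N0) mod q)" using that u_def by simp
    have "(t - N0) mod q < q" using q by simp
    thus "i0 + (t - N0) mod q < N0" using q_def by simp
  qed
  have ind: "tail (induced_sub K C) = tail K" "head (induced_sub K C) = head K"
    "arcs (induced_sub K C) = {e \<in> arcs K. tail K e \<in> C \<and> head K e \<in> C}"
    by (simp_all add: induced_sub_def)
  have uarc: "u t \<in> arcs K \<and> tail K (u t) \<in> C \<and> head K (u t) \<in> C" for t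
  proof (cases "t < N0")
    case True then show ?thesis using zC u_def by simp
  next
    case False then show ?thesis using ur[of t] zC by simp
  qed
  have uhead: "head K (u t) = tail K (u (t + 1))" for t
  proof (cases "t + 1 < N0")
    case True then show ?thesis using za u_def by simp
  next
    case False
    show ?thesis
    proof (cases "t + 1 = N0")
      case True
      have tt: "t = N0 - 1" using True by simp
      have "u t = z (N0 - 1)" using u_def tt by simp
      moreover have "u (t+1) = z i0" using u_def True by simp
      ultimately have "u t = z (N0 - 1)" "u (t+1) = z i0" by simp_all
      moreover have "head K (z (N0 - 1)) = v0" using za(2)[of "N0 - 1"] v0_def by simp
      ultimately show ?thesis using i0 by simp
    next
      case False2: False
      hence tN: "N0 \<le> t" using False by simp
      have um: "(t + 1 - N0) mod q = (if (t - N0) mod q + 1 = q then 0 else (t - N0) mod q + 1)"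
        using mod_succ_cases[OF q, of "t - N0"] by (simp add: algebra_simps)
      have ut: "u t = z (i0 + (t - N0) mod q)" using ur tN by simp
      have ut1: "u (t+1) = z (i0 + (t + 1 - N0) mod q)" using ur[of "t+1"] tN by simp
      show ?thesis
      proof (cases "(t - N0) mod q + 1 = q")
        case True
        hence "i0 + (t - N0) mod q = N0 - 1" using q_def by simp
        hence "head K (u t) = v0" using ut za(2)[of "N0 - 1"] v0_def by simp
        moreover have "u (t+1) = z i0" using ut1 um True by simp
        ultimately show ?thesis using i0 by simp
      next
        case False
        hence "u (t+1) = z (i0 + (t - N0) mod q + 1)" using ut1 um by (simp add: algebra_simps)
        thus ?thesis using ut za(2) by simp
      qed
    qed
  qed
  have "u \<in> edge_shift (induced_sub K C)"
    unfolding edge_shift_def ind using uarc uhead by simp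
  moreover have "\<forall>i\<le>N0 - 1. z i = u i" using u_def by simp
  ultimately have "backward_asymptotic z (edge_shift (induced_sub K C))"
    unfolding backward_asymptotic_def by blast
  thus ?thesis using Ccomp inC by blast
qed

definition fpath :: "('v,'e) pre_digraph \<Rightarrow> 'v \<Rightarrow> 'v \<Rightarrow> nat \<Rightarrow> (nat \<Rightarrow> 'e) \<Rightarrow> bool" where
  "fpath K a c n p \<longleftrightarrow> (\<forall>k<n. p k \<in> arcs K) \<and> (\<forall>k. Suc k < n \<longrightarrow> head K (p k) = tail K (p (Suc k))) \<and>
     (if n = 0 then a = c else tail K (p 0) = a \<and> head K (p (n - 1)) = c)"

lemma rtrancl_fpath:
  assumes "(a, c) \<in> (edge_rel K)\<^sup>*"
  shows "\<exists>n p. fpath K a c n p"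
  using assms
proof (induction rule: rtrancl_induct)
  case base
  show ?case by (rule exI[of _ 0]) (simp add: fpath_def)
next
  case (step b c)
  then obtain n p where p: "fpath K a b n p" by blast
  from step(2) obtain e where e: "e \<in> arcs K" "tail K e = b" "head K e = c"
    unfolding edge_rel_def by blast
  define p' where "p' = p(n := e)"
  have "fpath K a c (Suc n) p'"
    unfolding fpath_def
  proof (intro conjI allI impI)
    fix k assume "k < Suc n"
    thus "p' k \<in> arcs K" using p e unfolding fpath_def p'_def by auto
  next
    fix k assume k: "Suc k < Suc n"
    show "head K (p' k) = tail K (p' (Suc k))"
    proof (cases "Suc k < n")
      case True then show ?thesis using p unfolding fpath_def p'_def by auto
    next
      case False
      hence "Suc k = n" using k by simp
      then show ?thesis using p e unfolding fpath_def p'_def by (auto split: if_splits)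
    qed
  next
    show "if Suc n = 0 then a = c else tail K (p' 0) = a \<and> head K (p' (Suc n - 1)) = c"
      using p e unfolding fpath_def p'_def by (cases "n = 0") auto
  qed
  thus ?case by blast
qed

lemma glue:
  assumes b: "b \<in> edge_shift K" and x: "x \<in> edge_shift K"
    and p: "fpath K (tail K (b N)) (tail K (x j)) n p"
  defines "z \<equiv> \<lambda>i. if j \<le> i then x i else if j - int n \<le> i then p (nat (i - (j - int n)))
                   else b (i + (N - (j - int n)))"
  shows "z \<in> edge_shift K" "\<forall>i\<ge>j. z i = x i" "\<forall>i < j - int n. z i = sh (N - (j - int n)) b i"
proof -
  have ba: "b i \<in> arcs K" "head K (b i) = tail K (b (i+1))" for i using b by (auto simp: edge_shift_def)
  have xa: "x i \<in> arcs K" "head K (x i) = tail K (x (i+1))" for i using x by (auto simp: edge_shift_def)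
  have pa: "\<And>k. k < n \<Longrightarrow> p k \<in> arcs K" "\<And>k. Suc k < n \<Longrightarrow> head K (p k) = tail K (p (Suc k))"
    using p unfolding fpath_def by auto
  have p0: "n = 0 \<Longrightarrow> tail K (b N) = tail K (x j)"
    "n > 0 \<Longrightarrow> tail K (p 0) = tail K (b N) \<and> head K (p (n - 1)) = tail K (x j)"
    using p unfolding fpath_def by auto
  have "z i \<in> arcs K \<and> head K (z i) = tail K (z (i+1))" for i
  proof (cases "j \<le> i")
    case True then show ?thesis using xa z_def by simp
  next
    case False
    show ?thesis
    proof (cases "j - int n \<le> i")
      case True
      define k where "k = nat (i - (j - int n))"
      have k: "k < n" "int k = i - (j - int n)" using True False k_def by auto
      have zi: "z i = p k" using True False z_def k_def by simp
      show ?thesis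
      proof (cases "i + 1 < j")
        case True
        have "z (i+1) = p (Suc k)" using True k z_def by (simp add: nat_add_distrib algebra_simps)
          (smt (verit) Suc_eq_plus1 nat_int of_nat_Suc)
        moreover have "Suc k < n" using True k by simp
        ultimately show ?thesis using zi pa k by simp
      next
        case False3: False
        hence "i + 1 = j" using False by simp
        hence "z (i+1) = x j" "k = n - 1" using k z_def by auto
        thus ?thesis using zi pa p0 k by auto
      qed
    next
      case False2: False
      have zi: "z i = b (i + (N - (j - int n)))" using False False2 z_def by simp
      show ?thesis
      proof (cases "i + 1 < j - int n")
        case True
        hence "z (i+1) = b (i + (N - (j - int n)) + 1)" using z_def by (simp add: algebra_simps)
        thus ?thesis using zi ba by simp
      next
        case False4: False
        hence ii: "i + 1 = j - int n" using False2 by simp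
        have e1: "i + (N - (j - int n)) + 1 = N" using ii by simp
        have hb: "head K (z i) = tail K (b N)" by (metis e1 zi ba(2))
        show ?thesis
        proof (cases "n = 0")
          case True
          hence "z (i+1) = x j" using ii z_def by simp
          thus ?thesis using hb p0 True zi ba by simp
        next
          case False
          hence "z (i+1) = p 0" using ii z_def by simp
          thus ?thesis using hb p0 False zi ba by simp
        qed
      qed
    qed
  qed
  thus "z \<in> edge_shift K" by (simp add: edge_shift_def)
  show "\<forall>i\<ge>j. z i = x i" using z_def by simp
  show "\<forall>i < j - int n. z i = sh (N - (j - int n)) b i" using z_def by simp
qed

definition good :: "('v,'e) pre_digraph \<Rightarrow> ('e \<Rightarrow> 'a) \<Rightarrow> (int \<Rightarrow> 'v set \<times> 'a \<times> 'v set) \<Rightarrow> bool" where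
  "good G L x \<longleftrightarrow> (\<forall>j. \<exists>y\<in>sofic G L. \<exists>z\<in>XS G L. (\<exists>N. \<forall>i\<le>N. z i = beta G L y i) \<and> (\<forall>i\<ge>j. z i = x i))"

lemma H2_tail_app [simp]: "tail (H2 G L) e = fst e" using H2_props(1) by metis
lemma H2_head_app [simp]: "head (H2 G L) e = snd (snd e)" using H2_props(2) by metis

lemma char_back:
  assumes ok: "graph_ok G" and x: "x \<in> XS G L" and g: "good G L x"
  shows "x \<in> edge_shift (Hprime G L)"
proof -
  let ?K = "H2 G L"
  have "fst (x j) \<in> Hprime_verts G L" for j
  proof -
    obtain y z N where y: "y \<in> sofic G L" and z: "z \<in> XS G L" and zb: "\<forall>i\<le>N. z i = beta G L y i"
      and zx: "\<forall>i\<ge>j. z i = x i"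
      using g unfolding good_def by blast
    have zK: "z \<in> edge_shift ?K" using z H2_props(6) by blast
    obtain C N' where C: "C \<in> components ?K" "\<forall>i\<le>N'. tail ?K (z i) \<in> C"
      and ba: "backward_asymptotic z (edge_shift (induced_sub ?K C))"
      using tail_component[OF H2_fin(1)[OF ok] H2_props(5) zK] by blast
    obtain u N'' where u: "u \<in> edge_shift (induced_sub ?K C)" "\<forall>i\<le>N''. z i = u i"
      using ba unfolding backward_asymptotic_def by blast
    have "\<forall>i\<le>min N N''. beta G L y i = u i"
    proof (intro allI impI)
      fix i assume "i \<le> min N N''"
      hence a: "i \<le> N" and b: "i \<le> N''" by simp_all
      have "z i = beta G L y i" using zb a by blast
      moreover have "z i = u i" using u(2) b by blast
      ultimately show "beta G L y i = u i" by simp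
    qed
    hence bas: "backward_asymptotic (beta G L y) (edge_shift (induced_sub ?K C))"
      unfolding backward_asymptotic_def using u(1) by blast
    have "tail ?K (z (min N' j)) \<in> C" using C(2) by simp
    hence vC: "fst (z (min N' j)) \<in> C" using H2_props(1) by metis
    have "(fst (z (min N' j)), fst (z j)) \<in> (edge_rel ?K)\<^sup>*"
      using es_reach[OF zK, of "min N' j" j] by simp
    moreover have "z j = x j" using zx by simp
    ultimately show ?thesis unfolding Hprime_verts_eq using C(1) y bas vC by auto
  qed
  thus ?thesis using x es_Hprime by blast
qed

lemma char_fwd:
  assumes ok: "graph_ok G" and rr: "right_resolving G L" and x: "x \<in> edge_shift (Hprime G L)"
  shows "x \<in> XS G L \<and> good G L x"
proof -
  let ?K = "H2 G L"
  let ?R = "edge_rel ?K"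
  have xs: "x \<in> XS G L" and xv: "\<forall>i. fst (x i) \<in> Hprime_verts G L" using x es_Hprime by blast+
  have "\<exists>y\<in>sofic G L. \<exists>z\<in>XS G L. (\<exists>N. \<forall>i\<le>N. z i = beta G L y i) \<and> (\<forall>i\<ge>j. z i = x i)" for j
  proof -
    have "fst (x j) \<in> Hprime_verts G L" using xv by blast
    then obtain C y v where C: "C \<in> components ?K" and y: "y \<in> sofic G L"
      and ba: "backward_asymptotic (beta G L y) (edge_shift (induced_sub ?K C))"
      and v: "v \<in> C" "(v, fst (x j)) \<in> ?R\<^sup>*"
      unfolding Hprime_verts_eq by blast
    obtain u N where u: "u \<in> edge_shift (induced_sub ?K C)" "\<forall>i\<le>N. beta G L y i = u i"
      using ba unfolding backward_asymptotic_def by blast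
    have aC: "fst (beta G L y N) \<in> C"
    proof -
      have "u N \<in> arcs (induced_sub ?K C)" using u(1) by (simp add: edge_shift_def)
      hence "fst (u N) \<in> C" by (simp add: induced_sub_def H2_props(1))
      thus ?thesis using u(2) by simp
    qed
    obtain v0 where v0: "C = {w. recurrent ?K w \<and> (v0, w) \<in> ?R\<^sup>* \<and> (w, v0) \<in> ?R\<^sup>*}"
      using C unfolding components_def by blast
    have r1: "(fst (beta G L y N), v0) \<in> ?R\<^sup>*" using aC v0 by blast
    have r2: "(v0, v) \<in> ?R\<^sup>*" using v(1) v0 by blast
    have "(fst (beta G L y N), fst (x j)) \<in> ?R\<^sup>*"
      using rtrancl_trans[OF rtrancl_trans[OF r1 r2] v(2)] .
    then obtain n p where p: "fpath ?K (tail ?K (beta G L y N)) (tail ?K (x j)) n p"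
      using rtrancl_fpath H2_props(1) by metis
    have bK: "beta G L y \<in> edge_shift ?K" using beta_in[OF ok rr y] H2_props(6) by blast
    have xK: "x \<in> edge_shift ?K" using xs H2_props(6) by blast
    obtain z where z: "z \<in> edge_shift ?K" "\<forall>i\<ge>j. z i = x i"
      "\<forall>i < j - int n. z i = sh (N - (j - int n)) (beta G L y) i"
      using glue[OF bK xK p] by blast
    have zX: "z \<in> XS G L" using z(1) H2_props(6) by blast
    have "\<forall>i \<le> j - int n - 1. z i = beta G L (sh (N - (j - int n)) y) i"
      unfolding beta_sh using z(3) by simp
    moreover have "sh (N - (j - int n)) y \<in> sofic G L" using sofic_sh y by blast
    ultimately show ?thesis using zX z(2) by blast
  qed
  thus ?thesis using xs unfolding good_def by blast
qed

lemma char: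
  assumes "graph_ok G" "right_resolving G L"
  shows "x \<in> edge_shift (Hprime G L) \<longleftrightarrow> x \<in> XS G L \<and> good G L x"
  using char_fwd[OF assms] char_back[OF assms(1)] by blast

lemma good_self:
  assumes "y \<in> sofic G L" "z \<in> XS G L" "\<forall>i\<le>N. z i = beta G L y i"
  shows "good G L z"
  unfolding good_def using assms by blast

lemma beta_Hp:
  assumes ok: "graph_ok G" and rr: "right_resolving G L" and y: "y \<in> sofic G L"
  shows "beta G L y \<in> edge_shift (Hprime G L)"
proof -
  have "beta G L y \<in> XS G L" using beta_in[OF ok rr y] .
  moreover have "good G L (beta G L y)" using good_self[OF y calculation, of 0] by simp
  ultimately show ?thesis using char_back[OF ok] by blast
qed

lemma shrink:
  assumes ok: "graph_ok G" and rr: "right_resolving G L"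
    and th_map: "\<forall>x\<in>edge_shift (Hprime G L). \<theta> x \<in> edge_shift (Hprime G L)"
    and win: "\<forall>x\<in>edge_shift (Hprime G L). \<forall>x'\<in>edge_shift (Hprime G L). \<forall>i.
                (\<forall>t. i - m \<le> t \<and> t \<le> i + m \<longrightarrow> x t = x' t) \<longrightarrow> \<theta> x i = \<theta> x' i"
    and lb: "\<forall>x\<in>edge_shift (Hprime G L). lab (\<theta> x) = lab x"
    and x: "x \<in> edge_shift (Hprime G L)"
  shows "fst (\<theta> x i) \<subseteq> fst (x i)"
proof -
  let ?X = "edge_shift (Hprime G L)"
  have XXS: "w \<in> ?X \<Longrightarrow> w \<in> XS G L" for w using es_Hprime by blast
  have g: "good G L x" using char_fwd[OF ok rr x] by auto
  obtain y z N where y: "y \<in> sofic G L" and z: "z \<in> XS G L" and zb: "\<forall>t\<le>N. z t = beta G L y t"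
    and zx: "\<forall>t\<ge>i - \<bar>m\<bar>. z t = x t"
    using g unfolding good_def by blast
  have zH: "z \<in> ?X" using char_back[OF ok z good_self[OF y z zb]] .
  have bH: "beta G L y \<in> ?X" using beta_Hp[OF ok rr y] .
  define i1 where "i1 = min (N - \<bar>m\<bar>) i"
  have "\<forall>t. i1 - m \<le> t \<and> t \<le> i1 + m \<longrightarrow> z t = beta G L y t"
  proof (intro allI impI)
    fix t assume "i1 - m \<le> t \<and> t \<le> i1 + m"
    hence "t \<le> N" unfolding i1_def by linarith
    thus "z t = beta G L y t" using zb by simp
  qed
  hence e1: "\<theta> z i1 = \<theta> (beta G L y) i1" using win zH bH by blast
  have tb: "\<theta> (beta G L y) \<in> XS G L" using th_map bH XXS by blast
  have "fst (\<theta> (beta G L y) i1) \<subseteq> fst (beta G L y i1)"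
    using beta_max[OF tb] lb bH by simp
  moreover have "beta G L y i1 = z i1" using zb unfolding i1_def by simp
  ultimately have s1: "fst (\<theta> z i1) \<subseteq> fst (z i1)" using e1 by simp
  have tz: "\<theta> z \<in> XS G L" using th_map zH XXS by blast
  have "fst (\<theta> z i) \<subseteq> fst (z i)"
    by (rule sg_mono[OF tz z _ s1]) (use lb zH i1_def in auto)
  moreover have "\<forall>t. i - m \<le> t \<and> t \<le> i + m \<longrightarrow> z t = x t"
  proof (intro allI impI)
    fix t assume "i - m \<le> t \<and> t \<le> i + m"
    hence "t \<ge> i - \<bar>m\<bar>" by linarith
    thus "z t = x t" using zx by simp
  qed
  hence "\<theta> z i = \<theta> x i" using win zH x by blast
  moreover have "z i = x i" using zx by simp
  ultimately show ?thesis by simp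
qed

lemma label_pres_id:
  assumes ok: "graph_ok G" and rr: "right_resolving G L"
    and th_map: "\<forall>x\<in>edge_shift (Hprime G L). \<theta> x \<in> edge_shift (Hprime G L)"
    and win: "\<forall>x\<in>edge_shift (Hprime G L). \<forall>x'\<in>edge_shift (Hprime G L). \<forall>i.
                (\<forall>t. i - m \<le> t \<and> t \<le> i + m \<longrightarrow> x t = x' t) \<longrightarrow> \<theta> x i = \<theta> x' i"
    and lb: "\<forall>x\<in>edge_shift (Hprime G L). lab (\<theta> x) = lab x"
    and thi_map: "\<forall>x\<in>edge_shift (Hprime G L). \<theta>i x \<in> edge_shift (Hprime G L)"
    and wini: "\<forall>x\<in>edge_shift (Hprime G L). \<forall>x'\<in>edge_shift (Hprime G L). \<forall>i.
                (\<forall>t. i - mi \<le> t \<and> t \<le> i + mi \<longrightarrow> x t = x' t) \<longrightarrow> \<theta>i x i = \<theta>i x' i"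
    and lbi: "\<forall>x\<in>edge_shift (Hprime G L). lab (\<theta>i x) = lab x"
    and inv: "\<forall>x\<in>edge_shift (Hprime G L). \<theta>i (\<theta> x) = x"
    and x: "x \<in> edge_shift (Hprime G L)"
  shows "\<theta> x = x"
proof -
  have tx: "\<theta> x \<in> edge_shift (Hprime G L)" using th_map x by blast
  have eq: "fst (\<theta> x i) = fst (x i)" for i
  proof
    show "fst (\<theta> x i) \<subseteq> fst (x i)" by (rule shrink[OF ok rr th_map win lb x])
    have "fst (\<theta>i (\<theta> x) i) \<subseteq> fst (\<theta> x i)" by (rule shrink[OF ok rr thi_map wini lbi tx])
    thus "fst (x i) \<subseteq> fst (\<theta> x i)" using inv x by simp
  qed
  have xs: "x \<in> XS G L" and txs: "\<theta> x \<in> XS G L" using x tx es_Hprime by blast+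
  show ?thesis
  proof (rule ext)
    fix i
    have "\<theta> x i = (fst (\<theta> x i), lab (\<theta> x) i, fst (\<theta> x (i+1)))" by (rule sg_step(6)[OF txs])
    also have "\<dots> = (fst (x i), lab x i, fst (x (i+1)))" using eq lb x by simp
    also have "\<dots> = x i" by (rule sg_step(6)[OF xs, symmetric])
    finally show "\<theta> x i = x i" .
  qed
qed

lemma transfer_k:
  assumes rr: "right_resolving G L" and x: "x \<in> XS G L" and x': "x' \<in> XS G L"
    and ag: "\<forall>t. a \<le> t \<and> t \<le> b \<longrightarrow> x t = x' t" and ab: "a \<le> b"
    and k: "k \<in> SS G L x"
  shows "\<exists>k' \<in> SS G L x'. \<forall>t. a \<le> t \<and> t \<le> b \<longrightarrow> k' t = k t"
proof -
  have kp: "k \<in> edge_shift G" "label_map L k = lab x" "\<forall>j. tail G (k j) \<in> fst (x j)"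
    using k by (auto simp: SS_def)
  have "x a = x' a" using ag ab by simp
  hence "tail G (k a) \<in> fst (x' a)" using kp(3) by metis
  from sg_extend[OF x' this] obtain k' where k': "k' \<in> edge_shift G" "label_map L k' = lab x'"
    "\<forall>j. tail G (k' j) \<in> fst (x' j)" "tail G (k' a) = tail G (k a)" by blast
  have "\<forall>t. a \<le> t \<and> t \<le> b \<longrightarrow> k' t = k t"
  proof (intro allI impI)
    fix t assume t: "a \<le> t \<and> t \<le> b"
    show "k' t = k t"
    proof (rule rr_agree[OF rr k'(1) kp(1) k'(4)])
      fix s assume "a \<le> s" "s \<le> b"
      hence "x s = x' s" using ag by blast
      hence "lab x s = lab x' s" by simp
      thus "L (k' s) = L (k s)" using k'(2) kp(2) by (metis lab_app)
    qed (use t in auto)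
  qed
  moreover have "k' \<in> SS G L x'" using k' by (simp add: SS_def)
  ultimately show ?thesis by blast
qed

lemma SS_shift:
  assumes x: "x \<in> XS G L"
  shows "SS G L (shift x) = shift ` SS G L x"
proof
  show "shift ` SS G L x \<subseteq> SS G L (shift x)"
  proof
    fix k' assume "k' \<in> shift ` SS G L x"
    then obtain k where k: "k \<in> SS G L x" "k' = shift k" by blast
    have ke: "k \<in> edge_shift G" and kl: "label_map L k = lab x" and kt: "\<forall>j. tail G (k j) \<in> fst (x j)"
      using k(1) by (auto simp: SS_def)
    have "shift k \<in> edge_shift G" by (rule es_shift[OF ke])
    moreover have "label_map L (shift k) = lab (shift x)" by (metis label_shift kl)
    moreover have "\<forall>j. tail G (shift k j) \<in> fst (shift x j)" using kt by (simp add: shift_def)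
    ultimately show "k' \<in> SS G L (shift x)" using k(2) by (simp add: SS_def)
  qed
  show "SS G L (shift x) \<subseteq> shift ` SS G L x"
  proof
    fix k assume k: "k \<in> SS G L (shift x)"
    define k0 where "k0 = sh (-1) k"
    have "k = shift k0" unfolding k0_def shift_def sh_def by simp
    moreover have "k0 \<in> SS G L x"
    proof -
      have "k0 \<in> edge_shift G" using k es_sh unfolding k0_def SS_def by blast
      moreover have "label_map L k0 = lab x"
      proof
        fix t
        have "label_map L k (t - 1) = lab (shift x) (t - 1)" using k by (simp add: SS_def)
        thus "label_map L k0 t = lab x t" by (simp add: k0_def shift_def)
      qed
      moreover have "tail G (k0 j) \<in> fst (x j)" for j
      proof -
        have "tail G (k (j - 1)) \<in> fst (shift x (j - 1))" using k by (simp add: SS_def)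
        thus ?thesis by (simp add: k0_def shift_def)
      qed
      ultimately show ?thesis by (simp add: SS_def)
    qed
    ultimately show "k \<in> shift ` SS G L x" by blast
  qed
qed

lemma Pm_shift: "Pm H (shift ` Sg) (shift y) = shift (Pm H Sg y)"
proof (rule ext)
  fix j
  have gen: "{tail H (m j') |m. m \<in> shift ` Sg} = {tail H (m (j'+1)) |m. m \<in> Sg}" for j'
    by (auto simp: shift_def)
  have "{tail H (m j) |m. m \<in> shift ` Sg} = {tail H (m (j+1)) |m. m \<in> Sg}" by (rule gen)
  moreover have "{tail H (m (j+1)) |m. m \<in> shift ` Sg} = {tail H (m (j+1+1)) |m. m \<in> Sg}" by (rule gen)
  ultimately show "Pm H (shift ` Sg) (shift y) j = shift (Pm H Sg y) j"
    by (simp add: Pm_def shift_def)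
qed

lemma SS_beta:
  "SS G L (beta G L y) = {k \<in> edge_shift G. label_map L k = y}"
  unfolding SS_def by (auto simp: beta_def Let_def)

lemma cont_seq:
  assumes "\<And>i. continuous_map X (discrete_topology UNIV) (\<lambda>x. f x i)"
  shows "continuous_map X seq_top f"
  unfolding seq_top_def continuous_map_componentwise_UNIV using assms by blast

definition Phi :: "('v,'e) pre_digraph \<Rightarrow> ('e \<Rightarrow> 'a) \<Rightarrow> ('w,'f) pre_digraph \<Rightarrow>
     ((int \<Rightarrow> 'e) \<Rightarrow> (int \<Rightarrow> 'f)) \<Rightarrow> ((int \<Rightarrow> 'a) \<Rightarrow> (int \<Rightarrow> 'b)) \<Rightarrow>
     (int \<Rightarrow> 'v set \<times> 'a \<times> 'v set) \<Rightarrow> (int \<Rightarrow> 'w set \<times> 'b \<times> 'w set)" where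
  "Phi G L H \<phi> \<psi> x = Pm H (\<phi> ` SS G L x) (\<psi> (lab x))"

locale csetup =
  fixes G :: "('v,'e) pre_digraph" and LG :: "'e \<Rightarrow> 'a"
    and H :: "('w,'f) pre_digraph" and LH :: "'f \<Rightarrow> 'b"
    and \<psi> :: "(int \<Rightarrow> 'a) \<Rightarrow> (int \<Rightarrow> 'b)" and \<psi>i :: "(int \<Rightarrow> 'b) \<Rightarrow> (int \<Rightarrow> 'a)"
    and \<phi> :: "(int \<Rightarrow> 'e) \<Rightarrow> (int \<Rightarrow> 'f)" and \<phi>i :: "(int \<Rightarrow> 'f) \<Rightarrow> (int \<Rightarrow> 'e)"
    and m :: int and mi :: int
  assumes okG: "graph_ok G" and okH: "graph_ok H"
    and rrG: "right_resolving G LG" and rrH: "right_resolving H LH"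
    and \<phi>map: "\<And>k. k \<in> edge_shift G \<Longrightarrow> \<phi> k \<in> edge_shift H"
    and \<phi>imap: "\<And>k. k \<in> edge_shift H \<Longrightarrow> \<phi>i k \<in> edge_shift G"
    and \<phi>inv: "\<And>k. k \<in> edge_shift G \<Longrightarrow> \<phi>i (\<phi> k) = k"
    and \<phi>iinv: "\<And>k. k \<in> edge_shift H \<Longrightarrow> \<phi> (\<phi>i k) = k"
    and \<phi>win: "\<And>k k' i. k \<in> edge_shift G \<Longrightarrow> k' \<in> edge_shift G \<Longrightarrow>
                 (\<forall>t. i - m \<le> t \<and> t \<le> i + m \<longrightarrow> k t = k' t) \<Longrightarrow> \<phi> k i = \<phi> k' i"
    and \<phi>iwin: "\<And>k k' i. k \<in> edge_shift H \<Longrightarrow> k' \<in> edge_shift H \<Longrightarrow>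
                 (\<forall>t. i - mi \<le> t \<and> t \<le> i + mi \<longrightarrow> k t = k' t) \<Longrightarrow> \<phi>i k i = \<phi>i k' i"
    and \<phi>lab: "\<And>k. k \<in> edge_shift G \<Longrightarrow> label_map LH (\<phi> k) = \<psi> (label_map LG k)"
    and \<phi>ilab: "\<And>k. k \<in> edge_shift H \<Longrightarrow> label_map LG (\<phi>i k) = \<psi>i (label_map LH k)"
    and \<psi>inv: "\<And>y. y \<in> sofic G LG \<Longrightarrow> \<psi>i (\<psi> y) = y"
    and \<psi>iinv: "\<And>y. y \<in> sofic H LH \<Longrightarrow> \<psi> (\<psi>i y) = y"
    and \<psi>map: "\<And>y. y \<in> sofic G LG \<Longrightarrow> \<psi> y \<in> sofic H LH"
    and \<psi>imap: "\<And>y. y \<in> sofic H LH \<Longrightarrow> \<psi>i y \<in> sofic G LG"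
    and \<psi>sh: "\<And>y. y \<in> sofic G LG \<Longrightarrow> \<psi> (shift y) = shift (\<psi> y)"
    and \<psi>ish: "\<And>y. y \<in> sofic H LH \<Longrightarrow> \<psi>i (shift y) = shift (\<psi>i y)"
    and \<phi>sh: "\<And>k. k \<in> edge_shift G \<Longrightarrow> \<phi> (shift k) = shift (\<phi> k)"
    and \<phi>ish: "\<And>k. k \<in> edge_shift H \<Longrightarrow> \<phi>i (shift k) = shift (\<phi>i k)"
begin

lemma swap: "csetup H LH G LG \<psi>i \<psi> \<phi>i \<phi> mi m"
  by (unfold_locales) (assumption | rule okG okH rrG rrH \<phi>map \<phi>imap \<phi>inv \<phi>iinv \<phi>win \<phi>iwin \<phi>lab \<phi>ilab
      \<psi>inv \<psi>iinv \<psi>map \<psi>imap \<psi>sh \<psi>ish \<phi>sh \<phi>ish)+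

lemma SS_lab: "k \<in> SS G LG x \<Longrightarrow> label_map LH (\<phi> k) = \<psi> (lab x)"
  using \<phi>lab by (auto simp: SS_def)

lemma P1: assumes x: "x \<in> XS G LG" shows "Phi G LG H \<phi> \<psi> x \<in> XS H LH"
  unfolding Phi_def
proof (rule Pm_in[OF okH rrH])
  show "\<phi> ` SS G LG x \<subseteq> edge_shift H" using \<phi>map by (auto simp: SS_def)
  show "\<phi> ` SS G LG x \<noteq> {}" using SS_ne[OF x] by blast
  fix mm assume "mm \<in> \<phi> ` SS G LG x"
  thus "label_map LH mm = \<psi> (lab x)" using SS_lab by blast
qed

lemma P2: assumes x: "x \<in> XS G LG" shows "SS H LH (Phi G LG H \<phi> \<psi> x) = \<phi> ` SS G LG x"
proof
  have lx: "lab x \<in> sofic G LG" using lab_sofic[OF x] .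
  show "\<phi> ` SS G LG x \<subseteq> SS H LH (Phi G LG H \<phi> \<psi> x)"
  proof
    fix m0 assume "m0 \<in> \<phi> ` SS G LG x"
    then obtain k where k: "k \<in> SS G LG x" "m0 = \<phi> k" by blast
    have "m0 \<in> edge_shift H" using k \<phi>map by (auto simp: SS_def)
    moreover have "label_map LH m0 = lab (Phi G LG H \<phi> \<psi> x)" using SS_lab k by (simp add: Phi_def)
    moreover have "\<forall>j. tail H (m0 j) \<in> fst (Phi G LG H \<phi> \<psi> x j)" using k by (auto simp: Phi_def)
    ultimately show "m0 \<in> SS H LH (Phi G LG H \<phi> \<psi> x)" by (simp add: SS_def)
  qed
  show "SS H LH (Phi G LG H \<phi> \<psi> x) \<subseteq> \<phi> ` SS G LG x"
  proof
    fix m0 assume m0: "m0 \<in> SS H LH (Phi G LG H \<phi> \<psi> x)"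
    have m0e: "m0 \<in> edge_shift H" and m0l: "label_map LH m0 = \<psi> (lab x)"
      and m0t: "\<forall>j. tail H (m0 j) \<in> {tail H (mm j) |mm. mm \<in> \<phi> ` SS G LG x}"
      using m0 by (auto simp: SS_def Phi_def)
    define k where "k = \<phi>i m0"
    have ke: "k \<in> edge_shift G" using \<phi>imap m0e k_def by blast
    have m0k: "m0 = \<phi> k" using \<phi>iinv m0e k_def by simp
    have kl: "label_map LG k = lab x" using \<phi>ilab[OF m0e] m0l \<psi>inv[OF lx] k_def by simp
    have "tail G (k j) \<in> fst (x j)" for j
    proof -
      define a where "a = j - \<bar>mi\<bar>"
      obtain k0 where k0: "k0 \<in> SS G LG x" "tail H (m0 a) = tail H (\<phi> k0 a)"
        using m0t by blast
      have k0e: "k0 \<in> edge_shift G" using k0 by (simp add: SS_def)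
      have pk0: "\<phi> k0 \<in> edge_shift H" using \<phi>map k0e by blast
      have ag: "\<phi> k0 t = m0 t" if "a \<le> t" "t \<le> j + \<bar>mi\<bar>" for t
      proof (rule rr_agree[OF rrH pk0 m0e k0(2)[symmetric]])
        fix s
        have "label_map LH (\<phi> k0) = label_map LH m0" using SS_lab[OF k0(1)] m0l by simp
        thus "LH (\<phi> k0 s) = LH (m0 s)" by (metis lab_app)
      qed (use that in auto)
      have "\<phi>i (\<phi> k0) j = \<phi>i m0 j"
        by (rule \<phi>iwin[OF pk0 m0e]) (use ag a_def in auto)
      hence kk: "k0 j = k j" using \<phi>inv[OF k0e] k_def by simp
      have "tail G (k0 j) \<in> fst (x j)" using k0(1) by (simp add: SS_def)
      thus ?thesis using kk by simp
    qed
    hence "k \<in> SS G LG x" using ke kl by (simp add: SS_def)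
    thus "m0 \<in> \<phi> ` SS G LG x" using m0k by blast
  qed
qed

lemma P3: assumes x: "x \<in> XS G LG"
  shows "Phi H LH G \<phi>i \<psi>i (Phi G LG H \<phi> \<psi> x) = x"
proof -
  have "\<phi>i ` SS H LH (Phi G LG H \<phi> \<psi> x) = SS G LG x"
    unfolding P2[OF x] image_image using \<phi>inv by (auto simp: SS_def)
  moreover have "\<psi>i (lab (Phi G LG H \<phi> \<psi> x)) = lab x"
    using \<psi>inv[OF lab_sofic[OF x]] by (simp add: Phi_def)
  ultimately show ?thesis unfolding Phi_def[of H LH G \<phi>i \<psi>i] using Pm_SS[OF x] by simp
qed

lemma P4:
  assumes x: "x \<in> XS G LG" and x': "x' \<in> XS G LG"
    and ag: "\<forall>t. a \<le> t \<and> t \<le> b \<longrightarrow> x t = x' t"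
    and ia: "a \<le> i - \<bar>m\<bar>" and ib: "i + 1 + \<bar>m\<bar> \<le> b"
  shows "Phi G LG H \<phi> \<psi> x i = Phi G LG H \<phi> \<psi> x' i"
proof -
  have ag': "\<forall>t. a \<le> t \<and> t \<le> b \<longrightarrow> x' t = x t" using ag by simp
  have sub: "{tail H (mm j) |mm. mm \<in> \<phi> ` SS G LG x1} \<subseteq> {tail H (mm j) |mm. mm \<in> \<phi> ` SS G LG x2}"
    if x1: "x1 \<in> XS G LG" and x2: "x2 \<in> XS G LG" and ag1: "\<forall>t. a \<le> t \<and> t \<le> b \<longrightarrow> x1 t = x2 t"
      and j: "a \<le> j - \<bar>m\<bar>" "j + \<bar>m\<bar> \<le> b" for x1 x2 j
  proof
    fix v assume "v \<in> {tail H (mm j) |mm. mm \<in> \<phi> ` SS G LG x1}"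
    then obtain k where k: "k \<in> SS G LG x1" "v = tail H (\<phi> k j)" by blast
    obtain k' where k': "k' \<in> SS G LG x2" "\<forall>t. a \<le> t \<and> t \<le> b \<longrightarrow> k' t = k t"
      using transfer_k[OF rrG x1 x2 ag1 _ k(1)] j by fastforce
    have w: "\<forall>t. j - m \<le> t \<and> t \<le> j + m \<longrightarrow> k' t = k t"
    proof (intro allI impI)
      fix t assume "j - m \<le> t \<and> t \<le> j + m"
      moreover have "m \<le> \<bar>m\<bar>" "- \<bar>m\<bar> \<le> m" by simp_all
      ultimately have "a \<le> t \<and> t \<le> b" using j by linarith
      thus "k' t = k t" using k'(2) by blast
    qed
    have e1: "k' \<in> edge_shift G" using k'(1) unfolding SS_def by blast
    have e2: "k \<in> edge_shift G" using k(1) unfolding SS_def by blast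
    have "\<phi> k' j = \<phi> k j" by (rule \<phi>win[OF e1 e2 w])
    hence vv: "v = tail H (\<phi> k' j)" using k(2) by simp
    have "\<phi> k' \<in> \<phi> ` SS G LG x2" using k'(1) by (rule imageI)
    thus "v \<in> {tail H (mm j) |mm. mm \<in> \<phi> ` SS G LG x2}" using vv by blast
  qed
  have e1: "{tail H (mm j) |mm. mm \<in> \<phi> ` SS G LG x} = {tail H (mm j) |mm. mm \<in> \<phi> ` SS G LG x'}"
    if "a \<le> j - \<bar>m\<bar>" "j + \<bar>m\<bar> \<le> b" for j
    using sub[OF x x' ag that] sub[OF x' x ag' that] by blast
  have e2: "\<psi> (lab x) i = \<psi> (lab x') i"
  proof -
    obtain k where k: "k \<in> SS G LG x" using SS_ne[OF x] by blast
    obtain k' where k': "k' \<in> SS G LG x'" "\<forall>t. a \<le> t \<and> t \<le> b \<longrightarrow> k' t = k t"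
      using transfer_k[OF rrG x x' ag _ k] ia ib by fastforce
    have w: "\<forall>t. i - m \<le> t \<and> t \<le> i + m \<longrightarrow> k' t = k t"
    proof (intro allI impI)
      fix t assume "i - m \<le> t \<and> t \<le> i + m"
      moreover have "m \<le> \<bar>m\<bar>" "- \<bar>m\<bar> \<le> m" by simp_all
      ultimately have "a \<le> t \<and> t \<le> b" using ia ib by linarith
      thus "k' t = k t" using k'(2) by blast
    qed
    have e1: "k' \<in> edge_shift G" using k'(1) unfolding SS_def by blast
    have e2: "k \<in> edge_shift G" using k unfolding SS_def by blast
    have "\<phi> k' i = \<phi> k i" by (rule \<phi>win[OF e1 e2 w])
    moreover have "\<psi> (lab x) i = LH (\<phi> k i)" using SS_lab[OF k] by (metis lab_app)
    moreover have "\<psi> (lab x') i = LH (\<phi> k' i)" using SS_lab[OF k'(1)] by (metis lab_app)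
    ultimately show ?thesis by simp
  qed
  show ?thesis
    unfolding Phi_def Pm_def using e1[of i] e1[of "i+1"] e2 ia ib by simp
qed

lemma P5: assumes x: "x \<in> XS G LG"
  shows "Phi G LG H \<phi> \<psi> (shift x) = shift (Phi G LG H \<phi> \<psi> x)"
proof -
  have "\<phi> ` SS G LG (shift x) = shift ` \<phi> ` SS G LG x"
    unfolding SS_shift[OF x] image_image using \<phi>sh by (auto simp: SS_def)
  moreover have "\<psi> (lab (shift x)) = shift (\<psi> (lab x))"
    using \<psi>sh[OF lab_sofic[OF x]] label_shift by metis
  ultimately show ?thesis unfolding Phi_def using Pm_shift by metis
qed

lemma P6: assumes y: "y \<in> sofic G LG"
  shows "Phi G LG H \<phi> \<psi> (beta G LG y) = beta H LH (\<psi> y)"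
proof -
  have "\<phi> ` {k \<in> edge_shift G. label_map LG k = y} = {k \<in> edge_shift H. label_map LH k = \<psi> y}"
  proof
    show "\<phi> ` {k \<in> edge_shift G. label_map LG k = y} \<subseteq> {k \<in> edge_shift H. label_map LH k = \<psi> y}"
      using \<phi>map \<phi>lab by auto
    show "{k \<in> edge_shift H. label_map LH k = \<psi> y} \<subseteq> \<phi> ` {k \<in> edge_shift G. label_map LG k = y}"
    proof
      fix m0 assume m0: "m0 \<in> {k \<in> edge_shift H. label_map LH k = \<psi> y}"
      hence "\<phi>i m0 \<in> edge_shift G" "label_map LG (\<phi>i m0) = y" "m0 = \<phi> (\<phi>i m0)"
        using \<phi>imap \<phi>ilab \<psi>inv[OF y] \<phi>iinv by auto
      thus "m0 \<in> \<phi> ` {k \<in> edge_shift G. label_map LG k = y}" by blast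
    qed
  qed
  thus ?thesis unfolding Phi_def SS_beta lab_beta beta_Pm[of H] by simp
qed

lemma P7: assumes x: "x \<in> edge_shift (Hprime G LG)"
  shows "Phi G LG H \<phi> \<psi> x \<in> edge_shift (Hprime H LH)"
proof -
  have xs: "x \<in> XS G LG" and g: "good G LG x" using char_fwd[OF okG rrG x] by auto
  have "good H LH (Phi G LG H \<phi> \<psi> x)"
    unfolding good_def
  proof
    fix j
    obtain y z N where y: "y \<in> sofic G LG" and z: "z \<in> XS G LG" and zb: "\<forall>i\<le>N. z i = beta G LG y i"
      and zx: "\<forall>i\<ge>j - \<bar>m\<bar> - 1. z i = x i"
      using g unfolding good_def by blast
    have bx: "beta G LG y \<in> XS G LG" using beta_in[OF okG rrG y] .
    have "\<forall>i\<le>N - \<bar>m\<bar> - 1. Phi G LG H \<phi> \<psi> z i = beta H LH (\<psi> y) i"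
    proof (intro allI impI)
      fix i assume i: "i \<le> N - \<bar>m\<bar> - 1"
      have "Phi G LG H \<phi> \<psi> z i = Phi G LG H \<phi> \<psi> (beta G LG y) i"
        by (rule P4[OF z bx, of "i - \<bar>m\<bar>" N]) (use zb i in auto)
      thus "Phi G LG H \<phi> \<psi> z i = beta H LH (\<psi> y) i" using P6[OF y] by simp
    qed
    moreover have "\<forall>i\<ge>j. Phi G LG H \<phi> \<psi> z i = Phi G LG H \<phi> \<psi> x i"
    proof (intro allI impI)
      fix i assume i: "j \<le> i"
      show "Phi G LG H \<phi> \<psi> z i = Phi G LG H \<phi> \<psi> x i"
        by (rule P4[OF z xs, of "j - \<bar>m\<bar> - 1" "i + 1 + \<bar>m\<bar>"]) (use zx i in auto)
    qed
    moreover have "\<psi> y \<in> sofic H LH" using \<psi>map[OF y] .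
    moreover have "Phi G LG H \<phi> \<psi> z \<in> XS H LH" using P1[OF z] .
    ultimately show "\<exists>y\<in>sofic H LH. \<exists>z\<in>XS H LH. (\<exists>N. \<forall>i\<le>N. z i = beta H LH y i) \<and>
        (\<forall>i\<ge>j. z i = Phi G LG H \<phi> \<psi> x i)" by blast
  qed
  thus ?thesis using char_back[OF okH P1[OF xs]] by blast
qed

lemma XHp_XS: "x \<in> edge_shift (Hprime G LG) \<Longrightarrow> x \<in> XS G LG"
  using es_Hprime by blast

lemma P_cont:
  "continuous_map (subtopology seq_top (edge_shift (Hprime G LG)))
     (subtopology seq_top (edge_shift (Hprime H LH))) (Phi G LG H \<phi> \<psi>)"
proof (rule continuous_map_into_subtopology)
  show "Phi G LG H \<phi> \<psi> \<in> topspace (subtopology seq_top (edge_shift (Hprime G LG))) \<rightarrow> edge_shift (Hprime H LH)"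
    using P7 by auto
  show "continuous_map (subtopology seq_top (edge_shift (Hprime G LG))) seq_top (Phi G LG H \<phi> \<psi>)"
  proof (rule cont_seq, rule cont_discrete_window, intro ballI)
    fix i and x assume x: "x \<in> edge_shift (Hprime G LG)"
    show "\<exists>J. finite J \<and> (\<forall>x'\<in>edge_shift (Hprime G LG). (\<forall>t\<in>J. x' t = x t) \<longrightarrow> Phi G LG H \<phi> \<psi> x' i = Phi G LG H \<phi> \<psi> x i)"
    proof (intro exI conjI ballI impI)
      show "finite {i - \<bar>m\<bar> .. i + 1 + \<bar>m\<bar>}" by simp
      fix x' assume x': "x' \<in> edge_shift (Hprime G LG)" and ag: "\<forall>t\<in>{i - \<bar>m\<bar> .. i + 1 + \<bar>m\<bar>}. x' t = x t"
      show "Phi G LG H \<phi> \<psi> x' i = Phi G LG H \<phi> \<psi> x i"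
        by (rule P4[OF XHp_XS[OF x'] XHp_XS[OF x], of "i - \<bar>m\<bar>" "i + 1 + \<bar>m\<bar>"]) (use ag in auto)
    qed
  qed
qed

end

lemma conj_data:
  assumes c: "conjugacy X Y f" and sX: "\<And>x. x \<in> X \<Longrightarrow> shift x \<in> X"
  shows "\<exists>g. continuous_map (subtopology seq_top X) (subtopology seq_top Y) f \<and>
     continuous_map (subtopology seq_top Y) (subtopology seq_top X) g \<and>
     (\<forall>x\<in>X. f x \<in> Y) \<and> (\<forall>y\<in>Y. g y \<in> X) \<and> (\<forall>x\<in>X. g (f x) = x) \<and> (\<forall>y\<in>Y. f (g y) = y) \<and>
     (\<forall>x\<in>X. f (shift x) = shift (f x)) \<and> (\<forall>y\<in>Y. g (shift y) = shift (g y))"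
proof -
  have hm: "homeomorphic_map (subtopology seq_top X) (subtopology seq_top Y) f"
    and fs: "\<forall>x\<in>X. f (shift x) = shift (f x)" using c unfolding conjugacy_def by auto
  obtain g where g: "homeomorphic_maps (subtopology seq_top X) (subtopology seq_top Y) f g"
    using hm homeomorphic_map_maps by blast
  have cf: "continuous_map (subtopology seq_top X) (subtopology seq_top Y) f"
    and cg: "continuous_map (subtopology seq_top Y) (subtopology seq_top X) g"
    and gf: "\<forall>x\<in>X. g (f x) = x" and fg: "\<forall>y\<in>Y. f (g y) = y"
    using g unfolding homeomorphic_maps_def by auto
  have fm: "\<forall>x\<in>X. f x \<in> Y" using continuous_map_image_subset_topspace[OF cf] by auto
  have gm: "\<forall>y\<in>Y. g y \<in> X" using continuous_map_image_subset_topspace[OF cg] by auto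
  have gs: "\<forall>y\<in>Y. g (shift y) = shift (g y)"
  proof
    fix y assume y: "y \<in> Y"
    have gy: "g y \<in> X" using gm y by blast
    have "f (shift (g y)) = shift y" using fs gy fg y by simp
    hence "g (shift y) = g (f (shift (g y)))" by simp
    also have "\<dots> = shift (g y)" using gf sX[OF gy] by blast
    finally show "g (shift y) = shift (g y)" .
  qed
  show ?thesis using cf cg fm gm gf fg fs gs by blast
qed

context csetup
begin

lemma exist:
  "conjugacy (edge_shift (Hprime G LG)) (edge_shift (Hprime H LH)) (Phi G LG H \<phi> \<psi>)"
proof -
  have "homeomorphic_maps (subtopology seq_top (edge_shift (Hprime G LG))) (subtopology seq_top (edge_shift (Hprime H LH)))
          (Phi G LG H \<phi> \<psi>) (Phi H LH G \<phi>i \<psi>i)"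
    unfolding homeomorphic_maps_def
  proof (intro conjI)
    show "continuous_map (subtopology seq_top (edge_shift (Hprime G LG))) (subtopology seq_top (edge_shift (Hprime H LH))) (Phi G LG H \<phi> \<psi>)"
      by (rule P_cont)
    show "continuous_map (subtopology seq_top (edge_shift (Hprime H LH))) (subtopology seq_top (edge_shift (Hprime G LG))) (Phi H LH G \<phi>i \<psi>i)"
      by (rule csetup.P_cont[OF swap])
    show "\<forall>x\<in>topspace (subtopology seq_top (edge_shift (Hprime G LG))). Phi H LH G \<phi>i \<psi>i (Phi G LG H \<phi> \<psi> x) = x"
      using P3 XHp_XS by simp
    show "\<forall>y\<in>topspace (subtopology seq_top (edge_shift (Hprime H LH))). Phi G LG H \<phi> \<psi> (Phi H LH G \<phi>i \<psi>i y) = y"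
      using csetup.P3[OF swap] csetup.XHp_XS[OF swap] by simp
  qed
  hence "homeomorphic_map (subtopology seq_top (edge_shift (Hprime G LG))) (subtopology seq_top (edge_shift (Hprime H LH))) (Phi G LG H \<phi> \<psi>)"
    using homeomorphic_map_maps by blast
  moreover have "\<forall>x\<in>edge_shift (Hprime G LG). Phi G LG H \<phi> \<psi> (shift x) = shift (Phi G LG H \<phi> \<psi> x)"
    using P5 XHp_XS by blast
  ultimately show ?thesis unfolding conjugacy_def by blast
qed

lemma exist_lab: "lab (Phi G LG H \<phi> \<psi> x) = \<psi> (lab x)"
  by (simp add: Phi_def)

lemma uniq:
  assumes c: "conjugacy (edge_shift (Hprime G LG)) (edge_shift (Hprime H LH)) \<phi>2"
    and l: "\<forall>x\<in>edge_shift (Hprime G LG). lab (\<phi>2 x) = \<psi> (lab x)"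
    and x: "x \<in> edge_shift (Hprime G LG)"
  shows "\<phi>2 x = Phi G LG H \<phi> \<psi> x"
proof -
  let ?XG = "edge_shift (Hprime G LG)" and ?XH = "edge_shift (Hprime H LH)"
  let ?Phi = "Phi G LG H \<phi> \<psi>" and ?Psi = "Phi H LH G \<phi>i \<psi>i"
  have shG: "\<And>x. x \<in> ?XG \<Longrightarrow> shift x \<in> ?XG" by (rule es_shift)
  have shH: "\<And>x p. x \<in> ?XH \<Longrightarrow> sh p x \<in> ?XH" by (rule es_sh)
  obtain \<phi>2i where cf: "continuous_map (subtopology seq_top ?XG) (subtopology seq_top ?XH) \<phi>2"
     and cg: "continuous_map (subtopology seq_top ?XH) (subtopology seq_top ?XG) \<phi>2i"
     and fm: "\<forall>x\<in>?XG. \<phi>2 x \<in> ?XH" and gm: "\<forall>y\<in>?XH. \<phi>2i y \<in> ?XG"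
     and gf: "\<forall>x\<in>?XG. \<phi>2i (\<phi>2 x) = x" and fg: "\<forall>y\<in>?XH. \<phi>2 (\<phi>2i y) = y"
     and fs: "\<forall>x\<in>?XG. \<phi>2 (shift x) = shift (\<phi>2 x)" and gs: "\<forall>y\<in>?XH. \<phi>2i (shift y) = shift (\<phi>2i y)"
    using conj_data[OF c shG] by blast
  have Psim: "\<forall>y\<in>?XH. ?Psi y \<in> ?XG" using csetup.P7[OF swap] by blast
  have Phim: "\<forall>x\<in>?XG. ?Phi x \<in> ?XH" using P7 by blast
  have PhiPsi: "\<forall>y\<in>?XH. ?Phi (?Psi y) = y" using csetup.P3[OF swap] csetup.XHp_XS[OF swap] by blast
  have PsiPhi: "\<forall>x\<in>?XG. ?Psi (?Phi x) = x" using P3 XHp_XS by blast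
  define \<theta> where "\<theta> y = \<phi>2 (?Psi y)" for y
  define \<theta>i where "\<theta>i y = ?Phi (\<phi>2i y)" for y
  have cpt: "compactin seq_top ?XH" by (rule compact_edge_shift[OF Hprime_fin[OF okH]])
  have ct: "continuous_map (subtopology seq_top ?XH) (subtopology seq_top ?XH) \<theta>"
    using continuous_map_compose[OF csetup.P_cont[OF swap] cf] unfolding \<theta>_def o_def by simp
  have cti: "continuous_map (subtopology seq_top ?XH) (subtopology seq_top ?XH) \<theta>i"
    using continuous_map_compose[OF cg P_cont] unfolding \<theta>i_def o_def by simp
  have tsh: "\<forall>y\<in>?XH. \<theta> (shift y) = shift (\<theta> y)"
  proof
    fix y assume y: "y \<in> ?XH"
    have "?Psi (shift y) = shift (?Psi y)" using csetup.P5[OF swap csetup.XHp_XS[OF swap y]] .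
    thus "\<theta> (shift y) = shift (\<theta> y)" unfolding \<theta>_def using fs Psim y by simp
  qed
  have tish: "\<forall>y\<in>?XH. \<theta>i (shift y) = shift (\<theta>i y)"
  proof
    fix y assume y: "y \<in> ?XH"
    have "\<phi>2i (shift y) = shift (\<phi>2i y)" using gs y by blast
    moreover have "?Phi (shift (\<phi>2i y)) = shift (?Phi (\<phi>2i y))" using P5 XHp_XS gm y by blast
    ultimately show "\<theta>i (shift y) = shift (\<theta>i y)" unfolding \<theta>i_def by simp
  qed
  obtain mt where wt: "\<forall>x\<in>?XH. \<forall>x'\<in>?XH. \<forall>i. (\<forall>t. i - mt \<le> t \<and> t \<le> i + mt \<longrightarrow> x t = x' t) \<longrightarrow> \<theta> x i = \<theta> x' i"
    using uniform_window[OF cpt ct shH tsh] by blast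
  obtain mti where wti: "\<forall>x\<in>?XH. \<forall>x'\<in>?XH. \<forall>i. (\<forall>t. i - mti \<le> t \<and> t \<le> i + mti \<longrightarrow> x t = x' t) \<longrightarrow> \<theta>i x i = \<theta>i x' i"
    using uniform_window[OF cpt cti shH tish] by blast
  have tm: "\<forall>y\<in>?XH. \<theta> y \<in> ?XH" unfolding \<theta>_def using fm Psim by blast
  have tim: "\<forall>y\<in>?XH. \<theta>i y \<in> ?XH" unfolding \<theta>i_def using Phim gm by blast
  have tl: "\<forall>y\<in>?XH. lab (\<theta> y) = lab y"
  proof
    fix y assume y: "y \<in> ?XH"
    have "lab (\<theta> y) = \<psi> (lab (?Psi y))" unfolding \<theta>_def using l Psim y by blast
    also have "\<dots> = lab (?Phi (?Psi y))" by (simp add: exist_lab)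
    also have "\<dots> = lab y" using PhiPsi y by simp
    finally show "lab (\<theta> y) = lab y" .
  qed
  have til: "\<forall>y\<in>?XH. lab (\<theta>i y) = lab y"
  proof
    fix y assume y: "y \<in> ?XH"
    have "lab (\<theta>i y) = \<psi> (lab (\<phi>2i y))" unfolding \<theta>i_def by (simp add: exist_lab)
    also have "\<dots> = lab (\<phi>2 (\<phi>2i y))" using l gm y by simp
    also have "\<dots> = lab y" using fg y by simp
    finally show "lab (\<theta>i y) = lab y" .
  qed
  have tinv: "\<forall>y\<in>?XH. \<theta>i (\<theta> y) = y"
  proof
    fix y assume y: "y \<in> ?XH"
    have "\<theta>i (\<theta> y) = ?Phi (\<phi>2i (\<phi>2 (?Psi y)))" unfolding \<theta>_def \<theta>i_def by simp
    also have "\<dots> = ?Phi (?Psi y)" using gf Psim y by simp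
    also have "\<dots> = y" using PhiPsi y by simp
    finally show "\<theta>i (\<theta> y) = y" .
  qed
  have px: "?Phi x \<in> ?XH" using Phim x by blast
  have "\<theta> (?Phi x) = ?Phi x"
    by (rule label_pres_id[OF okH rrH tm wt tl tim wti til tinv px])
  moreover have "\<theta> (?Phi x) = \<phi>2 x" unfolding \<theta>_def using PsiPhi x by simp
  ultimately show ?thesis by simp
qed

end

theorem theorem4p6:
  fixes G :: "('v,'e) pre_digraph" and LG :: "'e \<Rightarrow> 'a"
    and H :: "('w,'f) pre_digraph" and LH :: "'f \<Rightarrow> 'b"
    and \<psi> :: "(int \<Rightarrow> 'a) \<Rightarrow> (int \<Rightarrow> 'b)"
    and \<phi> :: "(int \<Rightarrow> 'e) \<Rightarrow> (int \<Rightarrow> 'f)"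
  assumes "graph_ok G" and "graph_ok H"
    and "right_resolving G LG" and "right_resolving H LH"
    and "conjugacy (sofic G LG) (sofic H LH) \<psi>"
    and "conjugacy (edge_shift G) (edge_shift H) \<phi>"
    and "\<forall>x\<in>edge_shift G. label_map LH (\<phi> x) = \<psi> (label_map LG x)"
  shows "\<exists>\<phi>'. (conjugacy (edge_shift (Hprime G LG)) (edge_shift (Hprime H LH)) \<phi>' \<and>
              (\<forall>x\<in>edge_shift (Hprime G LG).
                 label_map subset_label (\<phi>' x) = \<psi> (label_map subset_label x))) \<and>
             (\<forall>\<phi>''. conjugacy (edge_shift (Hprime G LG)) (edge_shift (Hprime H LH)) \<phi>'' \<and>
                    (\<forall>x\<in>edge_shift (Hprime G LG).
                       label_map subset_label (\<phi>'' x) = \<psi> (label_map subset_label x))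
                    \<longrightarrow> (\<forall>x\<in>edge_shift (Hprime G LG). \<phi>'' x = \<phi>' x))"
proof -
  note okG = assms(1) and okH = assms(2) and rrG = assms(3) and rrH = assms(4)
  have shY: "\<And>y. y \<in> sofic G LG \<Longrightarrow> shift y \<in> sofic G LG" using sofic_sh[of _ G LG 1] by (simp add: sh_1)
  have shXG: "\<And>k. k \<in> edge_shift G \<Longrightarrow> shift k \<in> edge_shift G" by (rule es_shift)
  obtain \<psi>i where cpsi: "continuous_map (subtopology seq_top (sofic G LG)) (subtopology seq_top (sofic H LH)) \<psi>"
     and "continuous_map (subtopology seq_top (sofic H LH)) (subtopology seq_top (sofic G LG)) \<psi>i"
     and \<psi>map: "\<forall>x\<in>sofic G LG. \<psi> x \<in> sofic H LH" and \<psi>imap: "\<forall>y\<in>sofic H LH. \<psi>i y \<in> sofic G LG"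
     and \<psi>inv: "\<forall>x\<in>sofic G LG. \<psi>i (\<psi> x) = x" and \<psi>iinv: "\<forall>y\<in>sofic H LH. \<psi> (\<psi>i y) = y"
     and \<psi>sh: "\<forall>x\<in>sofic G LG. \<psi> (shift x) = shift (\<psi> x)" and \<psi>ish: "\<forall>y\<in>sofic H LH. \<psi>i (shift y) = shift (\<psi>i y)"
    using conj_data[OF assms(5) shY] by blast
  obtain \<phi>i where cphi: "continuous_map (subtopology seq_top (edge_shift G)) (subtopology seq_top (edge_shift H)) \<phi>"
     and cphii: "continuous_map (subtopology seq_top (edge_shift H)) (subtopology seq_top (edge_shift G)) \<phi>i"
     and \<phi>map: "\<forall>x\<in>edge_shift G. \<phi> x \<in> edge_shift H" and \<phi>imap: "\<forall>y\<in>edge_shift H. \<phi>i y \<in> edge_shift G"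
     and \<phi>inv: "\<forall>x\<in>edge_shift G. \<phi>i (\<phi> x) = x" and \<phi>iinv: "\<forall>y\<in>edge_shift H. \<phi> (\<phi>i y) = y"
     and \<phi>sh: "\<forall>x\<in>edge_shift G. \<phi> (shift x) = shift (\<phi> x)" and \<phi>ish: "\<forall>y\<in>edge_shift H. \<phi>i (shift y) = shift (\<phi>i y)"
    using conj_data[OF assms(6) shXG] by blast
  have cptG: "compactin seq_top (edge_shift G)" using compact_edge_shift graph_ok_fin[OF okG] by blast
  have cptH: "compactin seq_top (edge_shift H)" using compact_edge_shift graph_ok_fin[OF okH] by blast
  obtain m where wm: "\<forall>x\<in>edge_shift G. \<forall>x'\<in>edge_shift G. \<forall>i. (\<forall>t. i - m \<le> t \<and> t \<le> i + m \<longrightarrow> x t = x' t) \<longrightarrow> \<phi> x i = \<phi> x' i"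
    using uniform_window[OF cptG cphi es_sh \<phi>sh] by blast
  obtain mi where wmi: "\<forall>x\<in>edge_shift H. \<forall>x'\<in>edge_shift H. \<forall>i. (\<forall>t. i - mi \<le> t \<and> t \<le> i + mi \<longrightarrow> x t = x' t) \<longrightarrow> \<phi>i x i = \<phi>i x' i"
    using uniform_window[OF cptH cphii es_sh \<phi>ish] by blast
  have \<phi>ilab: "label_map LG (\<phi>i k) = \<psi>i (label_map LH k)" if k: "k \<in> edge_shift H" for k
  proof -
    have ik: "\<phi>i k \<in> edge_shift G" using \<phi>imap k by blast
    have "label_map LH k = \<psi> (label_map LG (\<phi>i k))" using assms(7) ik \<phi>iinv k by metis
    moreover have "label_map LG (\<phi>i k) \<in> sofic G LG" using ik unfolding sofic_def by blast
    ultimately show ?thesis using \<psi>inv by simp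
  qed
  interpret cs: csetup G LG H LH \<psi> \<psi>i \<phi> \<phi>i m mi
  proof (unfold_locales)
    show "graph_ok G" "graph_ok H" "right_resolving G LG" "right_resolving H LH" by fact+
  qed (use \<phi>map \<phi>imap \<phi>inv \<phi>iinv wm wmi assms(7) \<phi>ilab \<psi>inv \<psi>iinv \<psi>map \<psi>imap \<psi>sh \<psi>ish \<phi>sh \<phi>ish in blast)+
  show ?thesis
  proof (intro exI[of _ "Phi G LG H \<phi> \<psi>"] conjI allI impI ballI)
    show "conjugacy (edge_shift (Hprime G LG)) (edge_shift (Hprime H LH)) (Phi G LG H \<phi> \<psi>)"
      by (rule cs.exist)
  next
    fix x show "lab (Phi G LG H \<phi> \<psi> x) = \<psi> (lab x)" by (rule cs.exist_lab)
  next
    fix \<phi>'' x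
    assume h: "conjugacy (edge_shift (Hprime G LG)) (edge_shift (Hprime H LH)) \<phi>'' \<and>
           (\<forall>x\<in>edge_shift (Hprime G LG). lab (\<phi>'' x) = \<psi> (lab x))"
      and x: "x \<in> edge_shift (Hprime G LG)"
    show "\<phi>'' x = Phi G LG H \<phi> \<psi> x" using cs.uniq h x by blast
  qed
qed

end
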